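(* Let $n>k\geq 3$ be odd integers, $A$ a cyclically $k$-diagonal $n\times n$ array, $g=\gcd(n,k-1)$, $m=n/g$, $\ell=(k-1)/g$, and $I_j=[1+(j-1)g,\,jg]$ for $j\in[1,m]$. Let $E\subseteq[1,n]$ be such that there exist an integer $i\in[1,\ell-1]$, indices $j_1<j_2<\dots<j_{i+1}$ in $[1,m]$ with $j_{s+1}-j_s\equiv-\ell\pmod m$ for $s\in[1,i]$, and an integer $f\in[1,g-1]$, with $E=\big(I_{j_1}\cup\dots\cup I_{j_{i+1}}\big)\setminus[j_{i+1}g-f+1,\,j_{i+1}g]$. Let $C=(1,\dots,1)$ and $R=(r_1,\dots,r_n)$ with $r_i=-1$ iff $i\in E$. Let $h=k-1-|E|$ and let $D$ be the $(i+1)\times(h+g)$ array whose filled cells are all cells except the last $f$ cells of row $i+1$ (i.e. except $(i+1,c)$ for $c\in[h+g-f+1,h+g]$). Then $R$ and $C$ are a solution to $P(A)$ if and only if the $h$-knight is a solution to $T(D)$.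
   Context: Arrays are partially filled and toroidal; $F(A)$ is the set of filled cells; every row and column contains a filled cell. $s_R(i,j)=(i,j+t)$ and $s_C(i,j)=(i+t,j)$ with $t\ge1$ minimal such that the cell is filled. $CN_{RC}(i,j)=s_C^{c_{j'}}(i,j')$ with $(i,j')=s_R^{r_i}(i,j)$. A move function (permutation of $F(B)$) is a solution to $T(B)$ (a tour) if it is a single cycle of length $|F(B)|$. $R,C$ solve $P(A)$ if $CN_{RC}$ is a tour of $A$. The $a$-knight on an array $B$ is $N_a=s_C\circ s_R^{a}$. An $n\times n$ array is cyclically $k$-diagonal if its filled cells are exactly the $(i,j)$ with $i-j\bmod n\in\{0,\dots,k-1\}$. *)

theory Defs
  imports Main
begin

(* Arrays: cells are pairs (row, column), rows indexed 1..nr, columns 1..nc,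
   toroidal. An array is given by its dimensions and its set F of filled cells. *)

definition sR :: "nat \<Rightarrow> (nat \<times> nat) set \<Rightarrow> nat \<times> nat \<Rightarrow> nat \<times> nat" where
  "sR nc F = (\<lambda>(i, j). (i, (j - 1 + (LEAST t. t \<ge> 1 \<and> (i, (j - 1 + t) mod nc + 1) \<in> F)) mod nc + 1))"

definition sC :: "nat \<Rightarrow> (nat \<times> nat) set \<Rightarrow> nat \<times> nat \<Rightarrow> nat \<times> nat" where
  "sC nr F = (\<lambda>(i, j). ((i - 1 + (LEAST t. t \<ge> 1 \<and> ((i - 1 + t) mod nr + 1, j) \<in> F)) mod nr + 1, j))"

definition ipow :: "('a \<Rightarrow> 'a) \<Rightarrow> 'a set \<Rightarrow> int \<Rightarrow> 'a \<Rightarrow> 'a" where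
  "ipow f S a = (if a \<ge> 0 then f ^^ nat a else inv_into S f ^^ nat (- a))"

definition CN :: "nat \<Rightarrow> nat \<Rightarrow> (nat \<times> nat) set \<Rightarrow> (nat \<Rightarrow> int) \<Rightarrow> (nat \<Rightarrow> int)
                   \<Rightarrow> nat \<times> nat \<Rightarrow> nat \<times> nat" where
  "CN nr nc F R C = (\<lambda>(i, j). let c' = ipow (sR nc F) F (R i) (i, j)
                               in ipow (sC nr F) F (C (snd c')) c')"

definition is_tour :: "('a \<Rightarrow> 'a) \<Rightarrow> 'a set \<Rightarrow> bool" where
  "is_tour f F \<longleftrightarrow> finite F \<and> bij_betw f F F \<and> (\<forall>x\<in>F. \<forall>y\<in>F. \<exists>t. (f ^^ t) x = y)"

definition knight :: "nat \<Rightarrow> nat \<Rightarrow> (nat \<times> nat) set \<Rightarrow> nat \<Rightarrow> nat \<times> nat \<Rightarrow> nat \<times> nat" where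
  "knight nr nc F a = sC nr F \<circ> (sR nc F ^^ a)"

definition cyc_diag :: "nat \<Rightarrow> nat \<Rightarrow> (nat \<times> nat) set" where
  "cyc_diag n k = {(i, j). i \<in> {1..n} \<and> j \<in> {1..n} \<and> (int i - int j) mod int n < int k}"

definition Iblock :: "nat \<Rightarrow> nat \<Rightarrow> nat set" where
  "Iblock g j = {1 + (j - 1) * g .. j * g}"

end

theory Submission
  imports Defs
begin

lemma funpow_in: "(\<And>x. x \<in> F \<Longrightarrow> f x \<in> F) \<Longrightarrow> x \<in> F \<Longrightarrow> (f ^^ t) x \<in> F"
  by (induction t) simp_all

lemma inj_on_funpow_gen: "inj_on f F \<Longrightarrow> (\<And>x. x \<in> F \<Longrightarrow> f x \<in> F) \<Longrightarrow> inj_on (f ^^ t) F"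
proof (induction t)
  case 0 then show ?case by simp
next
  case (Suc t)
  have im: "(f ^^ t) ` F \<subseteq> F" using funpow_in[of F f] Suc.prems by blast
  have "inj_on f ((f ^^ t) ` F)" using Suc.prems im inj_on_subset by blast
  then have "inj_on (f \<circ> (f ^^ t)) F" using comp_inj_on Suc by blast
  then show ?case by (simp del: funpow.simps add: funpow_Suc_right[symmetric] funpow.simps(2)[symmetric])
qed

lemma funpow_mult_fix: "(f ^^ p) y = y \<Longrightarrow> (f ^^ (p * c)) y = y"
proof (induction c)
  case 0 then show ?case by simp
next
  case (Suc c)
  have "(f ^^ (p * Suc c)) y = (f ^^ p) ((f ^^ (p * c)) y)"
    by (simp add: funpow_add)
  then show ?case using Suc by simp
qed
lemma periodic:
  assumes "finite F" "inj_on f F" "\<And>x. x \<in> F \<Longrightarrow> f x \<in> F" "y \<in> F"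
  shows "\<exists>p>0. (f ^^ p) y = y"
proof -
  have sub: "(\<lambda>i. (f ^^ i) y) ` {0..card F} \<subseteq> F" using funpow_in[of F f] assms(3,4) by blast
  have ni: "\<not> inj_on (\<lambda>i. (f ^^ i) y) {0..card F}"
  proof
    assume "inj_on (\<lambda>i. (f ^^ i) y) {0..card F}"
    then have "card {0..card F} \<le> card F" using card_inj_on_le[OF _ sub assms(1)] by blast
    then show False by simp
  qed
  obtain i j where ij: "i \<noteq> j" "(f ^^ i) y = (f ^^ j) y"
    using ni unfolding inj_on_def by blast
  have "\<exists>a b. a < b \<and> (f ^^ a) y = (f ^^ b) y"
  proof (cases "i < j")
    case True then show ?thesis using ij by blast
  next
    case False then have "j < i" using ij(1) by simp
    then show ?thesis using ij(2) by metis
  qed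
  then obtain a b where ab: "a < b" "(f ^^ a) y = (f ^^ b) y" by blast
  have "(f ^^ a) ((f ^^ (b - a)) y) = (f ^^ (a + (b - a))) y"
    by (simp add: funpow_add)
  then have e1: "(f ^^ a) ((f ^^ (b - a)) y) = (f ^^ a) y"
    using ab by simp
  have i2: "inj_on (f ^^ a) F" using inj_on_funpow_gen assms(2,3) by blast
  have i3: "(f ^^ (b - a)) y \<in> F" using funpow_in[of F f] assms(3,4) by blast
  have "(f ^^ (b - a)) y = y" using inj_onD[OF i2 e1 i3 assms(4)] .
  then show ?thesis using ab by (intro exI[of _ "b - a"]) simp
qed

lemma tour_conj:
  assumes bij: "bij_betw \<beta> F G" and into: "\<And>x. x \<in> F \<Longrightarrow> f x \<in> F"
    and comm: "\<And>x. x \<in> F \<Longrightarrow> \<beta> (f x) = g (\<beta> x)"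
  shows "is_tour f F \<longleftrightarrow> is_tour g G"
proof -
  have finF: "finite F \<longleftrightarrow> finite G" using bij bij_betw_finite by blast
  have intoG: "y \<in> G \<Longrightarrow> g y \<in> G" for y
  proof -
    assume "y \<in> G"
    then obtain x where "x \<in> F" "y = \<beta> x" using bij by (auto simp: bij_betw_def)
    then show ?thesis using comm into bij by (metis bij_betwE)
  qed
  have it: "x \<in> F \<Longrightarrow> \<beta> ((f ^^ t) x) = (g ^^ t) (\<beta> x)" for x t
  proof (induction t)
    case 0 then show ?case by simp
  next
    case (Suc t) then show ?case using comm funpow_in[of F f, OF into] by auto
  qed
  have injeq: "inj_on f F \<longleftrightarrow> inj_on g G"
  proof
    assume i: "inj_on f F"
    show "inj_on g G"
    proof (rule inj_onI)
      fix y1 y2 assume y: "y1 \<in> G" "y2 \<in> G" "g y1 = g y2"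
      obtain x1 where x1: "x1 \<in> F" "y1 = \<beta> x1" using y bij by (auto simp: bij_betw_def)
      obtain x2 where x2: "x2 \<in> F" "y2 = \<beta> x2" using y bij by (auto simp: bij_betw_def)
      have "\<beta> (f x1) = \<beta> (f x2)" using comm x1 x2 y by simp
      then have "f x1 = f x2" using bij into x1 x2 by (meson bij_betw_def inj_onD)
      then have "x1 = x2" using i x1 x2 by (meson inj_onD)
      then show "y1 = y2" using x1 x2 by simp
    qed
  next
    assume i: "inj_on g G"
    show "inj_on f F"
    proof (rule inj_onI)
      fix x1 x2 assume x: "x1 \<in> F" "x2 \<in> F" "f x1 = f x2"
      then have "g (\<beta> x1) = g (\<beta> x2)" using comm by metis
      then have "\<beta> x1 = \<beta> x2" using i x bij by (meson bij_betwE inj_onD)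
      then show "x1 = x2" using bij x by (meson bij_betw_def inj_onD)
    qed
  qed
  have bijeq: "finite F \<Longrightarrow> bij_betw f F F \<longleftrightarrow> bij_betw g G G"
  proof -
    assume fin: "finite F"
    have fG: "finite G" using fin finF by simp
    have "bij_betw f F F \<longleftrightarrow> inj_on f F"
      using endo_inj_surj[OF fin, of f] into by (auto simp: bij_betw_def)
    moreover have "bij_betw g G G \<longleftrightarrow> inj_on g G"
      using endo_inj_surj[OF fG, of g] intoG by (auto simp: bij_betw_def)
    ultimately show ?thesis using injeq by simp
  qed
  have reacheq: "(\<forall>x\<in>F. \<forall>y\<in>F. \<exists>t. (f ^^ t) x = y) \<longleftrightarrow> (\<forall>x\<in>G. \<forall>y\<in>G. \<exists>t. (g ^^ t) x = y)"
  proof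
    assume r: "\<forall>x\<in>F. \<forall>y\<in>F. \<exists>t. (f ^^ t) x = y"
    show "\<forall>x\<in>G. \<forall>y\<in>G. \<exists>t. (g ^^ t) x = y"
    proof (intro ballI)
      fix y1 y2 assume y: "y1 \<in> G" "y2 \<in> G"
      obtain x1 where x1: "x1 \<in> F" "y1 = \<beta> x1" using y bij by (auto simp: bij_betw_def)
      obtain x2 where x2: "x2 \<in> F" "y2 = \<beta> x2" using y bij by (auto simp: bij_betw_def)
      obtain t where "(f ^^ t) x1 = x2" using r x1 x2 by blast
      then show "\<exists>t. (g ^^ t) y1 = y2" using it x1 x2 by metis
    qed
  next
    assume r: "\<forall>x\<in>G. \<forall>y\<in>G. \<exists>t. (g ^^ t) x = y"
    show "\<forall>x\<in>F. \<forall>y\<in>F. \<exists>t. (f ^^ t) x = y"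
    proof (intro ballI)
      fix x1 x2 assume x: "x1 \<in> F" "x2 \<in> F"
      obtain t where "(g ^^ t) (\<beta> x1) = \<beta> x2" using r x bij by (meson bij_betwE)
      then have "\<beta> ((f ^^ t) x1) = \<beta> x2" using it x by simp
      then have "(f ^^ t) x1 = x2" using bij x funpow_in[of F f, OF into]
        by (meson bij_betw_def inj_onD)
      then show "\<exists>t. (f ^^ t) x1 = x2" by blast
    qed
  qed
  show ?thesis unfolding is_tour_def using finF bijeq reacheq by blast
qed

lemma tour_return:
  assumes fin: "finite F" and into: "\<And>x. x \<in> F \<Longrightarrow> f x \<in> F" and inj: "inj_on f F"
    and SF: "S \<subseteq> F"
    and reach: "\<And>x. x \<in> F \<Longrightarrow> \<exists>t. (f ^^ t) x \<in> S"
    and psiS: "\<And>x. x \<in> S \<Longrightarrow> \<psi> x \<in> S"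
    and ret: "\<And>x. x \<in> S \<Longrightarrow> \<exists>\<tau>\<ge>1. (f ^^ \<tau>) x = \<psi> x \<and> (\<forall>t. 0 < t \<longrightarrow> t < \<tau> \<longrightarrow> (f ^^ t) x \<notin> S)"
  shows "is_tour f F \<longleftrightarrow> is_tour \<psi> S"
proof -
  obtain tau where tau: "\<And>x. x \<in> S \<Longrightarrow> tau x \<ge> 1 \<and> (f ^^ tau x) x = \<psi> x \<and> (\<forall>t. 0 < t \<longrightarrow> t < tau x \<longrightarrow> (f ^^ t) x \<notin> S)"
    using ret by metis
  have finS: "finite S" using fin SF finite_subset by blast
  have injp: "inj_on \<psi> S"
  proof -
    have *: "x = y" if xy: "x \<in> S" "y \<in> S" "\<psi> x = \<psi> y" "tau x \<le> tau y" for x y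
    proof -
      have "(f ^^ tau x) ((f ^^ (tau y - tau x)) y) = (f ^^ (tau x + (tau y - tau x))) y"
        by (simp add: funpow_add)
      also have "\<dots> = (f ^^ tau y) y" using xy by simp
      finally have "(f ^^ tau x) ((f ^^ (tau y - tau x)) y) = (f ^^ tau y) y" .
      also have "\<dots> = (f ^^ tau x) x" using tau xy by simp
      finally have "(f ^^ tau x) ((f ^^ (tau y - tau x)) y) = (f ^^ tau x) x" .
      moreover have "inj_on (f ^^ tau x) F" using inj_on_funpow_gen inj into by blast
      moreover have "(f ^^ (tau y - tau x)) y \<in> F" using funpow_in[of F f, OF into] xy SF by blast
      ultimately have e: "(f ^^ (tau y - tau x)) y = x" using xy SF by (meson inj_onD subsetD)
      show "x = y"
      proof (cases "tau y - tau x = 0")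
        case True then show ?thesis using e by simp
      next
        case False
        have "tau x \<ge> 1" using tau xy(1) by blast
        then have "0 < tau y - tau x" "tau y - tau x < tau y" using False by auto
        then have "(f ^^ (tau y - tau x)) y \<notin> S" using tau xy by blast
        then show ?thesis using e xy by simp
      qed
    qed
    show ?thesis by (rule inj_onI) (metis * nat_le_linear)
  qed
  have bijp: "bij_betw \<psi> S S"
    using endo_inj_surj[OF finS, of \<psi>] psiS injp by (auto simp: bij_betw_def)
  have bijf: "bij_betw f F F"
    using endo_inj_surj[OF fin, of f] into inj by (auto simp: bij_betw_def)
  have A: "\<And>x. x \<in> S \<Longrightarrow> (f ^^ t) x \<in> S \<Longrightarrow> \<exists>j. (\<psi> ^^ j) x = (f ^^ t) x" for t
  proof (induction t rule: less_induct)
    case (less t)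
    show ?case
    proof (cases "t = 0")
      case True then have "(\<psi> ^^ 0) x = (f ^^ t) x" by simp
      then show ?thesis by blast
    next
      case False
      have t1: "tau x \<ge> 1" "(f ^^ tau x) x = \<psi> x" "\<forall>t. 0 < t \<longrightarrow> t < tau x \<longrightarrow> (f ^^ t) x \<notin> S"
        using tau less.prems(1) by blast+
      have "tau x \<le> t"
      proof (rule ccontr)
        assume "\<not> tau x \<le> t"
        then have "t < tau x" by simp
        then show False using t1(3) False less.prems(2) by blast
      qed
      have "(f ^^ (t - tau x)) ((f ^^ tau x) x) = (f ^^ (t - tau x + tau x)) x"
        by (simp add: funpow_add)
      then have e: "(f ^^ t) x = (f ^^ (t - tau x)) (\<psi> x)"
        using \<open>tau x \<le> t\<close> t1(2) by simp
      have lt: "t - tau x < t" using t1(1) False by simp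
      have "\<psi> x \<in> S" using psiS less.prems(1) by blast
      then obtain j where j: "(\<psi> ^^ j) (\<psi> x) = (f ^^ (t - tau x)) (\<psi> x)"
        using less.IH[OF lt] less.prems(2) e by metis
      have "(\<psi> ^^ Suc j) x = (\<psi> ^^ j) (\<psi> x)" by (simp add: funpow_Suc_right del: funpow.simps)
      then show ?thesis using e j by metis
    qed
  qed
  have B: "x \<in> S \<Longrightarrow> \<exists>t. (\<psi> ^^ j) x = (f ^^ t) x" for x j
  proof (induction j)
    case 0 then have "(\<psi> ^^ 0) x = (f ^^ 0) x" by simp
    then show ?case by blast
  next
    case (Suc j)
    then obtain t where t: "(\<psi> ^^ j) x = (f ^^ t) x" by blast
    have jS: "(\<psi> ^^ j) x \<in> S" using funpow_in[of S \<psi>, OF psiS] Suc.prems by blast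
    have "(\<psi> ^^ Suc j) x = \<psi> ((\<psi> ^^ j) x)" by simp
    also have "\<dots> = (f ^^ tau ((\<psi> ^^ j) x)) ((\<psi> ^^ j) x)" using tau jS by simp
    also have "\<dots> = (f ^^ tau ((\<psi> ^^ j) x)) ((f ^^ t) x)" using t by simp
    also have "\<dots> = (f ^^ (tau ((\<psi> ^^ j) x) + t)) x" by (simp add: funpow_add)
    finally show ?case by blast
  qed
  show ?thesis
  proof
    assume T: "is_tour f F"
    show "is_tour \<psi> S" unfolding is_tour_def
    proof (intro conjI finS bijp ballI)
      fix x y assume xy: "x \<in> S" "y \<in> S"
      then obtain t where t: "(f ^^ t) x = y" using T SF unfolding is_tour_def by blast
      then obtain j where "(\<psi> ^^ j) x = (f ^^ t) x" using A[of x t] xy by blast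
      then show "\<exists>t. (\<psi> ^^ t) x = y" using t by blast
    qed
  next
    assume T: "is_tour \<psi> S"
    show "is_tour f F" unfolding is_tour_def
    proof (intro conjI fin bijf ballI)
      fix x y assume xy: "x \<in> F" "y \<in> F"
      obtain a where a: "(f ^^ a) x \<in> S" using reach xy(1) by blast
      obtain c where c: "(f ^^ c) y \<in> S" using reach xy(2) by blast
      obtain p where p: "p > 0" "(f ^^ p) y = y" using periodic[OF fin inj into xy(2)] by blast
      obtain j where j: "(\<psi> ^^ j) ((f ^^ a) x) = (f ^^ c) y" using T a c unfolding is_tour_def by blast
      obtain t where t: "(\<psi> ^^ j) ((f ^^ a) x) = (f ^^ t) ((f ^^ a) x)" using B[OF a] by blast
      have pc: "p * c \<ge> c" using p by simp
      have "(f ^^ (p * c - c)) ((f ^^ c) y) = (f ^^ (p * c - c + c)) y"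
        by (simp add: funpow_add)
      also have "\<dots> = (f ^^ (p * c)) y" using pc by simp
      also have "\<dots> = y" using funpow_mult_fix[OF p(2)] by blast
      finally have e1: "(f ^^ (p * c - c)) ((f ^^ c) y) = y" .
      have "(f ^^ (p * c - c + t + a)) x = (f ^^ (p * c - c)) ((f ^^ t) ((f ^^ a) x))"
        by (simp add: funpow_add)
      also have "\<dots> = y" using e1 j t by simp
      finally show "\<exists>t. (f ^^ t) x = y" by blast
    qed
  qed
qed

locale P3 =
  fixes n k g m l q f :: nat and js :: "nat \<Rightarrow> nat"
  assumes kodd: "odd k" and nk: "n > k" and k3: "k \<ge> 3"
    and gdef: "g = gcd n (k - 1)" and mdef: "m = n div g" and ldef: "l = (k - 1) div g"
    and q1: "1 \<le> q" and ql: "q \<le> l - 1"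
    and jsr: "\<forall>s\<in>{1..q+1}. js s \<in> {1..m}"
    and jsinc: "\<forall>s\<in>{1..q}. js s < js (s + 1)"
    and jscong: "\<forall>s\<in>{1..q}. (int (js (s + 1)) - int (js s)) mod int m = (- int l) mod int m"
    and f1: "1 \<le> f" and fg: "f \<le> g - 1"
begin

lemma g_pos: "g > 0" using gdef k3 by simp
lemma n_eq: "n = m * g" using gdef mdef by simp
lemma k_eq: "k - 1 = l * g" using gdef ldef by simp
lemma g2: "g \<ge> 2" using f1 fg by simp
lemma l2: "l \<ge> 2" using q1 ql by simp
lemma lm: "l < m"
proof -
  have "k - 1 < n" using nk by simp
  then have "l * g < m * g" using k_eq n_eq by simp
  then show ?thesis by simp
qed
lemma cop: "coprime l m"
proof -
  have "coprime ((k - 1) div gcd (k - 1) n) (n div gcd (k - 1) n)"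
    using div_gcd_coprime[of "k - 1" n] k3 by simp
  then show ?thesis using gdef ldef mdef by (simp add: gcd.commute)
qed

lemma js_mono: "1 \<le> s \<Longrightarrow> s < s' \<Longrightarrow> s' \<le> q + 1 \<Longrightarrow> js s + (s' - s) \<le> js s'"
proof (induction s' rule: less_induct)
  case (less s')
  show ?case
  proof (cases "s' = Suc s")
    case True
    then have "js s < js s'" using jsinc less.prems by auto
    then show ?thesis using True by simp
  next
    case False
    then have "s < s' - 1" "s' - 1 < s'" using less.prems by auto
    then have a: "js s + ((s' - 1) - s) \<le> js (s' - 1)" using less.IH[of "s' - 1"] less.prems by simp
    have "s' - 1 \<in> {1..q}" using less.prems \<open>s < s' - 1\<close> by auto
    then have "js (s' - 1) < js (s' - 1 + 1)" using jsinc by blast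
    then show ?thesis using a \<open>s < s' - 1\<close> by simp
  qed
qed

lemma js_lt: "1 \<le> s \<Longrightarrow> s < s' \<Longrightarrow> s' \<le> q + 1 \<Longrightarrow> js s < js s'"
  using js_mono[of s s'] by simp

lemma js_range: "1 \<le> s \<Longrightarrow> s \<le> q + 1 \<Longrightarrow> 1 \<le> js s \<and> js s \<le> m"
  using jsr by auto

lemma m_q: "q + 1 \<le> m"
proof -
  have "js 1 + q \<le> js (q + 1)" using js_mono[of 1 "q+1"] q1 by simp
  moreover have "1 \<le> js 1" "js (q+1) \<le> m" using js_range[of 1] js_range[of "q+1"] by auto
  ultimately show ?thesis by simp
qed

lemma js_cong: "1 \<le> s \<Longrightarrow> s \<le> q + 1 \<Longrightarrow> int (js s) mod int m = (int (js 1) - int (s - 1) * int l) mod int m"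
proof (induction s)
  case 0 then show ?case by simp
next
  case (Suc s)
  show ?case
  proof (cases "s = 0")
    case True then show ?thesis by simp
  next
    case False
    then have IH: "int (js s) mod int m = (int (js 1) - int (s - 1) * int l) mod int m"
      using Suc by simp
    have c: "(int (js (s + 1)) - int (js s)) mod int m = (- int l) mod int m"
      using jscong Suc.prems False by auto
    have "int (js (Suc s)) mod int m = (int (js s) + (int (js (s + 1)) - int (js s))) mod int m"
      by simp
    also have "\<dots> = ((int (js s)) mod int m + (int (js (s + 1)) - int (js s)) mod int m) mod int m"
      by (simp add: mod_add_eq)
    also have "\<dots> = ((int (js 1) - int (s - 1) * int l) mod int m + (- int l) mod int m) mod int m"
      using IH c by simp
    also have "\<dots> = (int (js 1) - int (s - 1) * int l - int l) mod int m"
      by (simp add: mod_add_eq)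
    also have "int (js 1) - int (s - 1) * int l - int l = int (js 1) - int (Suc s - 1) * int l"
      using False by (simp add: algebra_simps of_nat_diff)
    finally show ?thesis .
  qed
qed

end

context P3 begin

definition N0 where "N0 = (q + 1) * g - f"
definition hh where "hh = k - 1 - N0"
definition erow where "erow p = (js (p div g + 1) - 1) * g + p mod g"
definition Eset where "Eset = (\<Union>s\<in>{1..q+1}. Iblock g (js s)) - {js (q+1) * g - f + 1 .. js (q+1) * g}"
definition E0 where "E0 = erow ` {0..<N0}"

lemma N0_eq: "N0 = q * g + (g - f)"
  using fg g2 unfolding N0_def by (simp add: algebra_simps)
lemma N0_gt: "N0 > g"
proof -
  have "1 * g \<le> q * g" using q1 by (rule mult_le_mono1)
  then have a: "g \<le> q * g" by simp
  have "N0 = q * g + (g - f)" by (rule N0_eq)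
  moreover have "g - f \<ge> 1" using fg g2 by simp
  ultimately show ?thesis using a by linarith
qed
lemma ql': "q + 1 \<le> l" using ql l2 by simp
lemma N0_le: "N0 + f \<le> k - 1"
proof -
  have "(q + 1) * g \<le> l * g" using ql' by (rule mult_le_mono1)
  then show ?thesis using k_eq fg g2 unfolding N0_def by simp
qed
lemma hh_N0: "hh + N0 = k - 1" using N0_le unfolding hh_def by simp
lemma hh_ge: "hh \<ge> f" using N0_le unfolding hh_def by simp
lemma hh1: "hh \<ge> 1" using hh_ge f1 by simp

lemma idx_lt: "w < g \<Longrightarrow> (u * g + w < N0 \<longleftrightarrow> u \<le> q \<and> (u < q \<or> w < g - f))"
proof -
  assume w: "w < g"
  show ?thesis
  proof (cases "u < q")
    case True
    then have "u + 1 \<le> q" by simp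
    then have "(u + 1) * g \<le> q * g" by (rule mult_le_mono1)
    then have "u * g + w < q * g" using w by simp
    then show ?thesis using True N0_eq by simp
  next
    case False
    show ?thesis
    proof (cases "u = q")
      case True then show ?thesis using N0_eq by auto
    next
      case False
      then have "q + 1 \<le> u" using \<open>\<not> u < q\<close> by simp
      then have "(q + 1) * g \<le> u * g" by (rule mult_le_mono1)
      then have "N0 \<le> u * g + w" using N0_eq fg by simp
      then show ?thesis using \<open>\<not> u < q\<close> False by simp
    qed
  qed
qed

lemma idx_bounds: "p < N0 \<Longrightarrow> p div g \<le> q \<and> (p div g < q \<or> p mod g < g - f)"
proof -
  assume "p < N0"
  moreover have "p = (p div g) * g + p mod g" by simp
  moreover have "p mod g < g" using g_pos by simp
  ultimately show ?thesis using idx_lt[of "p mod g" "p div g"] by simp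
qed

lemma erow_blk: "p < N0 \<Longrightarrow> erow p div g = js (p div g + 1) - 1 \<and> erow p mod g = p mod g"
  unfolding erow_def using g_pos by simp

lemma erow_lt: "p < N0 \<Longrightarrow> erow p < n"
proof -
  assume p: "p < N0"
  then have "p div g + 1 \<le> q + 1" using idx_bounds by simp
  then have j: "1 \<le> js (p div g + 1)" "js (p div g + 1) \<le> m" using js_range by auto
  have "erow p < (js (p div g + 1) - 1) * g + g" unfolding erow_def using g_pos by simp
  also have "\<dots> = js (p div g + 1) * g" using j by (cases "js (p div g + 1)") auto
  also have "\<dots> \<le> m * g" using j by simp
  finally show ?thesis using n_eq by simp
qed

lemma erow_mono: "p < p' \<Longrightarrow> p' < N0 \<Longrightarrow> erow p < erow p'"
proof -
  assume pp: "p < p'" "p' < N0"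
  have b1: "p div g \<le> q" "p' div g \<le> q" using idx_bounds pp by (meson less_trans)+
  have dle: "p div g \<le> p' div g" using pp by (simp add: div_le_mono)
  show ?thesis
  proof (cases "p div g = p' div g")
    case True
    then have "p mod g < p' mod g" using pp
      by (metis add_less_cancel_left div_mult_mod_eq)
    then show ?thesis unfolding erow_def using True by simp
  next
    case False
    then have lt: "p div g + 1 < p' div g + 1" using dle by simp
    have j: "js (p div g + 1) < js (p' div g + 1)" using js_lt[OF _ lt] b1 by simp
    have j1: "1 \<le> js (p div g + 1)" using js_range b1 by simp
    have "erow p < (js (p div g + 1) - 1) * g + g" unfolding erow_def using g_pos by simp
    also have "\<dots> = js (p div g + 1) * g" using j1 by (cases "js (p div g + 1)") auto
    also have "\<dots> \<le> (js (p' div g + 1) - 1) * g" using j by (intro mult_le_mono1) simp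
    also have "\<dots> \<le> erow p'" unfolding erow_def by simp
    finally show ?thesis .
  qed
qed

lemma erow_inj: "inj_on erow {0..<N0}"
proof (rule inj_onI)
  fix x y assume "x \<in> {0..<N0}" "y \<in> {0..<N0}" "erow x = erow y"
  then show "x = y" using erow_mono by (metis atLeastLessThan_iff less_irrefl nat_neq_iff)
qed

lemma erow_eq_iff: "p < N0 \<Longrightarrow> p' < N0 \<Longrightarrow> erow p = erow p' \<longleftrightarrow> p = p'"
  using erow_inj by (auto simp: inj_on_def)

lemma erow_less_iff: "p < N0 \<Longrightarrow> p' < N0 \<Longrightarrow> erow p < erow p' \<longleftrightarrow> p < p'"
  using erow_mono by (metis less_asym nat_neq_iff)

lemma E0_char: "w < g \<Longrightarrow> b * g + w \<in> E0 \<longleftrightarrow> (\<exists>u\<le>q. b = js (u + 1) - 1 \<and> (u < q \<or> w < g - f))"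
proof
  assume w: "w < g" and "b * g + w \<in> E0"
  then obtain p where p: "p < N0" "erow p = b * g + w" unfolding E0_def by auto
  then have "b = js (p div g + 1) - 1" "w = p mod g" using erow_blk[OF p(1)] w g_pos by auto
  then show "\<exists>u\<le>q. b = js (u + 1) - 1 \<and> (u < q \<or> w < g - f)" using idx_bounds[OF p(1)] by auto
next
  assume w: "w < g" and "\<exists>u\<le>q. b = js (u + 1) - 1 \<and> (u < q \<or> w < g - f)"
  then obtain u where u: "u \<le> q" "b = js (u + 1) - 1" "u < q \<or> w < g - f" by blast
  have p: "u * g + w < N0" using idx_lt[OF w] u by simp
  have "erow (u * g + w) = b * g + w" unfolding erow_def using w u g_pos by simp
  then show "b * g + w \<in> E0" unfolding E0_def using p by force
qed

lemma E0_erow: "w < g \<Longrightarrow> u \<le> q \<Longrightarrow> (u < q \<or> w < g - f) \<Longrightarrow> (js (u + 1) - 1) * g + w = erow (u * g + w)"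
  unfolding erow_def using g_pos by simp

lemma Eset_eq: "Eset = (\<lambda>p. erow p + 1) ` {0..<N0}"
proof
  show "Eset \<subseteq> (\<lambda>p. erow p + 1) ` {0..<N0}"
  proof
    fix x assume "x \<in> Eset"
    then obtain s where s: "s \<in> {1..q+1}" "x \<in> Iblock g (js s)" "x \<notin> {js (q+1) * g - f + 1 .. js (q+1) * g}"
      unfolding Eset_def by blast
    have j: "1 \<le> js s" using js_range s(1) by simp
    have x1: "1 + (js s - 1) * g \<le> x" "x \<le> js s * g" using s(2) unfolding Iblock_def by auto
    define w where "w = x - 1 - (js s - 1) * g"
    have jg: "js s * g = (js s - 1) * g + g" using j by (cases "js s") auto
    have w: "w < g" using x1 jg unfolding w_def by simp
    have xw: "x - 1 = (js s - 1) * g + w" using x1 unfolding w_def by simp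
    have cond: "s - 1 < q \<or> w < g - f"
    proof (cases "s = q + 1")
      case True
      then have "x \<le> js (q+1) * g - f" using s(3) x1 by auto
      then show ?thesis using True xw jg x1 fg by simp
    next
      case False then have "s - 1 < q" using s(1) by auto
      then show ?thesis by simp
    qed
    have sq: "s - 1 \<le> q" using s(1) by auto
    have "js (s - 1 + 1) = js s" using s(1) by simp
    then have "x - 1 = erow ((s - 1) * g + w)" using E0_erow[OF w sq cond] xw by simp
    moreover have "(s - 1) * g + w < N0" using idx_lt[OF w] cond sq by simp
    ultimately show "x \<in> (\<lambda>p. erow p + 1) ` {0..<N0}" using x1 by force
  qed
next
  show "(\<lambda>p. erow p + 1) ` {0..<N0} \<subseteq> Eset"
  proof
    fix x assume "x \<in> (\<lambda>p. erow p + 1) ` {0..<N0}"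
    then obtain p where p: "p < N0" "x = erow p + 1" by auto
    define u where "u = p div g"
    define w where "w = p mod g"
    have w: "w < g" unfolding w_def using g_pos by simp
    have ub: "u \<le> q" "u < q \<or> w < g - f" using idx_bounds[OF p(1)] unfolding u_def w_def by auto
    have j: "1 \<le> js (u + 1)" "js (u + 1) \<le> m" using js_range ub by auto
    have jg: "js (u + 1) * g = (js (u + 1) - 1) * g + g" using j by (cases "js (u + 1)") auto
    have xe: "x = (js (u + 1) - 1) * g + w + 1" using p unfolding erow_def u_def w_def by simp
    have inb: "x \<in> Iblock g (js (u + 1))" unfolding Iblock_def using xe jg w by simp
    have nt: "x \<notin> {js (q+1) * g - f + 1 .. js (q+1) * g}"
    proof (cases "u = q")
      case True
      then have "w < g - f" using ub by simp
      then show ?thesis using xe jg True fg by auto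
    next
      case False
      then have "u + 1 < q + 1" using ub by simp
      then have "js (u + 1) < js (q + 1)" using js_lt[of "u+1" "q+1"] by simp
      then have a: "js (u + 1) * g \<le> (js (q + 1) - 1) * g" by (intro mult_le_mono1) simp
      have b: "js (q+1) * g = (js (q+1) - 1) * g + g" using js_range[of "q+1"] q1 by (cases "js (q+1)") auto
      have "x \<le> (js (q + 1) - 1) * g" using a jg xe w by linarith
      then have "x < js (q+1) * g - f + 1" using b fg by linarith
      then show ?thesis by simp
    qed
    show "x \<in> Eset" unfolding Eset_def using inb nt ub by auto
  qed
qed

lemma card_Eset: "card Eset = N0"
proof -
  have "inj_on (\<lambda>p. erow p + 1) {0..<N0}" using erow_inj by (auto simp: inj_on_def)
  then show ?thesis unfolding Eset_eq by (simp add: card_image)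
qed

lemma E0_lt: "x \<in> E0 \<Longrightarrow> x < n" unfolding E0_def using erow_lt by auto

lemma Eset_E0: "x + 1 \<in> Eset \<longleftrightarrow> x \<in> E0"
  unfolding Eset_eq E0_def by auto

end

context P3 begin

definition jmp where "jmp t x = (x + t * (n + 1 - k)) mod n"

lemma sh_eq: "n + 1 - k = (m - l) * g"
proof -
  have "n + 1 - k = n - (k - 1)" using nk k3 by simp
  also have "\<dots> = m * g - l * g" using n_eq k_eq by simp
  also have "\<dots> = (m - l) * g" by (simp add: diff_mult_distrib)
  finally show ?thesis .
qed

lemma blk_step: "w < g \<Longrightarrow> (b * g + w + t * (n + 1 - k)) mod n = ((b + t * (m - l)) mod m) * g + w"
proof -
  assume w: "w < g"
  have e: "b * g + w + t * (n + 1 - k) = (b + t * (m - l)) * g + w"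
    using sh_eq by (simp add: algebra_simps)
  have "((b + t * (m - l)) * g + w) mod (g * m) = g * (((b + t * (m - l)) * g + w) div g mod m) + ((b + t * (m - l)) * g + w) mod g"
    by (rule mod_mult2_eq)
  also have "\<dots> = g * ((b + t * (m - l)) mod m) + w" using w g_pos by simp
  finally have "((b + t * (m - l)) * g + w) mod (g * m) = ((b + t * (m - l)) mod m) * g + w"
    by (simp add: mult.commute)
  moreover have "g * m = n" using n_eq by (simp add: mult.commute)
  ultimately show ?thesis unfolding e by simp
qed

lemma blockcong:
  assumes u: "u \<le> q" and s: "1 \<le> s" "s \<le> q + 1"
  shows "(js (u + 1) - 1 + t * (m - l)) mod m = js s - 1 \<longleftrightarrow> int m dvd (int u + int t + 1 - int s)"
proof -
  have ju: "1 \<le> js (u + 1)" "js (u + 1) \<le> m" using js_range u by auto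
  have jss: "1 \<le> js s" "js s \<le> m" using js_range s by auto
  have lt: "js s - 1 < m" using jss by simp
  have "(js (u + 1) - 1 + t * (m - l)) mod m = js s - 1 \<longleftrightarrow>
        (js (u + 1) - 1 + t * (m - l)) mod m = (js s - 1) mod m" using lt by simp
  also have "\<dots> \<longleftrightarrow> int ((js (u + 1) - 1 + t * (m - l)) mod m) = int ((js s - 1) mod m)" by linarith
  also have "\<dots> \<longleftrightarrow> (int (js (u + 1)) + int t * (int m - int l) - 1) mod int m = (int (js s) - 1) mod int m"
  proof -
    have a1: "int (t * (m - l)) = int t * (int m - int l)" using lm by (simp add: of_nat_diff)
    have a2: "int (js (u + 1) - 1 + t * (m - l)) = int (js (u + 1)) + int t * (int m - int l) - 1"
      using ju a1 by simp
    have a: "int ((js (u + 1) - 1 + t * (m - l)) mod m) = (int (js (u + 1)) + int t * (int m - int l) - 1) mod int m"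
      unfolding zmod_int a2 by simp
    have b: "int ((js s - 1) mod m) = (int (js s) - 1) mod int m"
      using jss by (simp add: zmod_int of_nat_diff)
    show ?thesis using a b by simp
  qed
  also have "\<dots> \<longleftrightarrow> int m dvd ((int (js (u + 1)) + int t * (int m - int l) - 1) - (int (js s) - 1))"
    by (rule mod_eq_dvd_iff)
  also have "\<dots> \<longleftrightarrow> int m dvd ((int s - 1 - int u - int t) * int l)"
  proof -
    have c1: "int (js (u + 1)) mod int m = (int (js 1) - int u * int l) mod int m"
      using js_cong[of "u + 1"] u by simp
    have c2: "int (js s) mod int m = (int (js 1) - int (s - 1) * int l) mod int m"
      using js_cong[of s] s by simp
    have d1: "int m dvd int (js (u + 1)) - (int (js 1) - int u * int l)" using c1 by (simp add: mod_eq_dvd_iff)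
    have d2: "int m dvd int (js s) - (int (js 1) - int (s - 1) * int l)" using c2 by (simp add: mod_eq_dvd_iff)
    have d3: "int m dvd int t * int m" by simp
    have eq: "((int (js (u + 1)) + int t * (int m - int l) - 1) - (int (js s) - 1))
      = (int (js (u + 1)) - (int (js 1) - int u * int l)) - (int (js s) - (int (js 1) - int (s - 1) * int l))
        + int t * int m + (int s - 1 - int u - int t) * int l"
      using s by (simp add: algebra_simps of_nat_diff)
    have "int m dvd (int (js (u + 1)) - (int (js 1) - int u * int l)) - (int (js s) - (int (js 1) - int (s - 1) * int l))
        + int t * int m" using dvd_add[OF dvd_diff[OF d1 d2] d3] .
    then show ?thesis unfolding eq using dvd_add_right_iff by blast
  qed
  also have "\<dots> \<longleftrightarrow> int m dvd (int s - 1 - int u - int t)"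
  proof -
    have "coprime (int m) (int l)" using cop by (simp add: coprime_int_iff coprime_commute)
    then show ?thesis by (rule coprime_dvd_mult_left_iff)
  qed
  also have "\<dots> \<longleftrightarrow> int m dvd (int u + int t + 1 - int s)"
  proof -
    have "int u + int t + 1 - int s = - (int s - 1 - int u - int t)" by simp
    then show ?thesis by (metis dvd_minus_iff)
  qed
  finally show ?thesis .
qed

lemma erow_split: "p < N0 \<Longrightarrow> erow p = (js (p div g + 1) - 1) * g + p mod g"
  unfolding erow_def by simp

lemma jmp_erow: "p < N0 \<Longrightarrow> jmp t (erow p) = ((js (p div g + 1) - 1 + t * (m - l)) mod m) * g + p mod g"
  unfolding jmp_def erow_def using blk_step[of "p mod g" "js (p div g + 1) - 1" t] g_pos by simp

lemma orb1:
  assumes p: "p < N0" and pg: "p + g < N0"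
  shows "jmp 1 (erow p) = erow (p + g)"
proof -
  define u where "u = p div g"
  have b: "(p + g) div g \<le> q" using idx_bounds[OF pg] by simp
  have pgd: "(p + g) div g = u + 1" "(p + g) mod g = p mod g" unfolding u_def using g_pos by (simp_all add: div_add_self2)
  have uq: "u \<le> q" "u + 2 \<le> q + 1" using b pgd by simp_all
  have "int m dvd (int u + int 1 + 1 - int (u + 2))" by simp
  then have "(js (u + 1) - 1 + 1 * (m - l)) mod m = js (u + 2) - 1"
    using blockcong[OF uq(1), of "u + 2" 1] uq by simp
  note jb = this
  have "jmp 1 (erow p) = ((js (u + 1) - 1 + 1 * (m - l)) mod m) * g + p mod g"
    using jmp_erow[OF p, of 1] unfolding u_def by simp
  also have "\<dots> = (js (u + 2) - 1) * g + p mod g" using jb by simp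
  also have "\<dots> = erow (p + g)" unfolding erow_def pgd by (simp add: numeral_2_eq_2)
  finally show ?thesis .
qed

lemma pg_cases:
  assumes p: "p < N0" and pg: "\<not> p + g < N0"
  shows "p div g = q \<or> (p div g + 1 = q \<and> g - f \<le> p mod g)"
proof -
  have w: "p mod g < g" using g_pos by simp
  have e: "(p div g + 1) * g + p mod g = p + g" by simp
  have "\<not> ((p div g + 1) * g + p mod g < N0)" unfolding e using pg .
  then have "\<not> (p div g + 1 \<le> q \<and> (p div g + 1 < q \<or> p mod g < g - f))"
    using idx_lt[OF w, of "p div g + 1"] by blast
  moreover have "p div g \<le> q" using idx_bounds[OF p] by simp
  ultimately show ?thesis by auto
qed

lemma zdvd_small: "int m dvd x \<Longrightarrow> 0 \<le> x \<Longrightarrow> x < int m \<Longrightarrow> x = 0"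
proof (rule ccontr)
  assume a: "int m dvd x" "0 \<le> x" "x < int m" "x \<noteq> 0"
  then have "0 < x" by simp
  then have "int m \<le> x" using zdvd_imp_le a(1) by blast
  then show False using a(3) by simp
qed

lemma orb2:
  assumes p: "p < N0" and pg: "\<not> p + g < N0" and t: "1 \<le> t" "t < m - p div g"
  shows "jmp t (erow p) \<notin> E0"
proof
  define u where "u = p div g"
  define w where "w = p mod g"
  have w: "w < g" unfolding w_def using g_pos by simp
  have uq: "u \<le> q" using idx_bounds[OF p] unfolding u_def by simp
  have pc: "u = q \<or> (u + 1 = q \<and> g - f \<le> w)" using pg_cases[OF p pg] unfolding u_def w_def .
  assume "jmp t (erow p) \<in> E0"
  then have "((js (u + 1) - 1 + t * (m - l)) mod m) * g + w \<in> E0"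
    unfolding jmp_erow[OF p] u_def w_def .
  then obtain u' where u': "u' \<le> q" "(js (u + 1) - 1 + t * (m - l)) mod m = js (u' + 1) - 1" "u' < q \<or> w < g - f"
    using E0_char[OF w] by blast
  have "int m dvd (int u + int t + 1 - int (u' + 1))" using blockcong[OF uq, of "u' + 1" t] u' by simp
  then have d: "int m dvd (int u + int t - int u')" by (simp add: add_diff_eq)
  have "int u + int t - int u' = 0"
  proof (rule zdvd_small[OF d])
    show "0 \<le> int u + int t - int u'" using pc u' t by auto
    show "int u + int t - int u' < int m" using t unfolding u_def by simp
  qed
  then have "u' = u + t" by simp
  then show False using pc u' t by auto
qed

lemma orb3:
  assumes p: "p < N0" and pg: "\<not> p + g < N0"
  shows "jmp (m - p div g) (erow p) = erow (p mod g)" and "1 \<le> m - p div g"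
proof -
  define u where "u = p div g"
  have uq: "u \<le> q" using idx_bounds[OF p] unfolding u_def by simp
  have "int m dvd (int u + int (m - u) + 1 - int 1)" using uq m_q by (simp add: of_nat_diff)
  then have "(js (u + 1) - 1 + (m - u) * (m - l)) mod m = js 1 - 1"
    using blockcong[OF uq, of 1 "m - u"] by simp
  moreover have "erow (p mod g) = (js 1 - 1) * g + p mod g" unfolding erow_def using g_pos by simp
  ultimately show "jmp (m - p div g) (erow p) = erow (p mod g)" unfolding jmp_erow[OF p] u_def by simp
  show "1 \<le> m - p div g" using uq m_q unfolding u_def by simp
qed

lemma jmp_reach: "x < n \<Longrightarrow> \<exists>t. jmp t x \<in> E0"
proof -
  assume x: "x < n"
  define b where "b = x div g"
  define w where "w = x mod g"
  have w: "w < g" unfolding w_def using g_pos by simp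
  have xe: "x = b * g + w" unfolding b_def w_def by simp
  have bm: "b < m" using x n_eq unfolding b_def by (simp add: less_mult_imp_div_less)
  define c where "c = js 1 - 1"
  have "1 \<le> js 1" "js 1 \<le> m" using js_range[of 1] by auto
  then have cm: "c < m" unfolding c_def by linarith
  obtain X Y where XY: "l * X = m * Y + gcd l m" using bezout_nat[of l m] l2 by auto
  then have XY1: "l * X = m * Y + 1" using cop by simp
  define D where "D = b + m - c"
  define t where "t = X * D"
  have iD: "int D = int b + int m - int c" unfolding D_def using cm by (simp add: of_nat_diff)
  have i0: "int (t * (m - l)) = int t * (int m - int l)" using lm by (simp add: of_nat_diff)
  have i1: "int (b + t * (m - l)) = int b + int t * int m - int t * int l"
    using i0 by (simp add: algebra_simps)
  have i2: "int t * int l = int D * (int l * int X)" unfolding t_def by (simp add: algebra_simps)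
  have i3: "int l * int X = int m * int Y + 1" using XY1 by (metis of_nat_1 of_nat_add of_nat_mult)
  have e: "int (b + t * (m - l)) = int c + int m * (int t - int D * int Y - 1)"
    unfolding i1 i2 i3 iD by (simp add: algebra_simps)
  have "int ((b + t * (m - l)) mod m) = (int c + int m * (int t - int D * int Y - 1)) mod int m"
    unfolding zmod_int e ..
  also have "\<dots> = int c mod int m" by (simp add: mod_mult_self2)
  also have "\<dots> = int c" using cm by simp
  finally have bt: "(b + t * (m - l)) mod m = c" by linarith
  have "jmp t x = ((b + t * (m - l)) mod m) * g + w" unfolding jmp_def xe using blk_step[OF w] by simp
  also have "\<dots> = erow w" unfolding bt erow_def c_def using w by simp
  finally have "jmp t x = erow w" .
  moreover have "erow w \<in> E0" unfolding E0_def using w N0_gt by simp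
  ultimately have "jmp t x \<in> E0" by simp
  then show ?thesis by blast
qed

end

context P3 begin

definition FF where "FF = cyc_diag n k"
definition GG where "GG = {0..<n} \<times> {0..<k}"
definition bt where "bt x = (fst x - 1, nat ((int (fst x) - int (snd x)) mod int n))"
definition bti where "bti y = (fst y + 1, (fst y + n - snd y) mod n + 1)"

lemma n_pos: "n > 0" using nk by simp

lemma FF_mem: "(i, j) \<in> FF \<longleftrightarrow> 1 \<le> i \<and> i \<le> n \<and> 1 \<le> j \<and> j \<le> n \<and> (int i - int j) mod int n < int k"
  unfolding FF_def cyc_diag_def by auto

lemma col_shift: "1 \<le> j \<Longrightarrow> (int i - int ((j - 1 + t) mod n + 1)) mod int n = (int i - int j - int t) mod int n"
proof -
  assume j: "1 \<le> j"
  have "int ((j - 1 + t) mod n) = (int j - 1 + int t) mod int n" using j by (simp add: zmod_int of_nat_diff algebra_simps)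
  then have "(int i - int ((j - 1 + t) mod n + 1)) mod int n = (int i - 1 - (int j - 1 + int t) mod int n) mod int n"
    by (simp add: algebra_simps)
  also have "\<dots> = (int i - 1 - (int j - 1 + int t)) mod int n" by (simp add: mod_diff_right_eq)
  finally show ?thesis by (simp add: algebra_simps)
qed

lemma row_shift: "1 \<le> i \<Longrightarrow> (int ((i - 1 + t) mod n + 1) - int j) mod int n = (int i + int t - int j) mod int n"
proof -
  assume i: "1 \<le> i"
  have "int ((i - 1 + t) mod n) = (int i - 1 + int t) mod int n" using i by (simp add: zmod_int of_nat_diff algebra_simps)
  then have "(int ((i - 1 + t) mod n + 1) - int j) mod int n = ((int i - 1 + int t) mod int n + (1 - int j)) mod int n"
    by (simp add: algebra_simps)
  also have "\<dots> = (int i - 1 + int t + (1 - int j)) mod int n" by (simp add: mod_add_left_eq)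
  finally show ?thesis by (simp add: algebra_simps)
qed

lemma sR_F:
  assumes x: "(i, j) \<in> FF"
  defines "d \<equiv> (int i - int j) mod int n"
  shows "sR n FF (i, j) = (i, (j - 1 + (if d \<ge> 1 then 1 else n - k + 1)) mod n + 1)"
proof -
  have ij: "1 \<le> i" "i \<le> n" "1 \<le> j" "j \<le> n" "d < int k" using x unfolding FF_mem d_def by auto
  have d0: "0 \<le> d" "d < int n" unfolding d_def using n_pos by simp_all
  have mem: "(i, (j - 1 + t) mod n + 1) \<in> FF \<longleftrightarrow> (d - int t) mod int n < int k" for t
  proof -
    have "(j - 1 + t) mod n + 1 \<le> n" using n_pos by (simp add: Suc_leI)
    then show ?thesis unfolding FF_mem using ij col_shift[OF ij(3), of i t] unfolding d_def
      by (simp add: mod_diff_left_eq)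
  qed
  define t0 where "t0 = (if d \<ge> 1 then 1 else n - k + 1)"
  have "(LEAST t. t \<ge> 1 \<and> (i, (j - 1 + t) mod n + 1) \<in> FF) = t0"
  proof (rule Least_equality)
    show "t0 \<ge> 1 \<and> (i, (j - 1 + t0) mod n + 1) \<in> FF"
    proof (cases "d \<ge> 1")
      case True
      then have "(d - 1) mod int n = d - 1" using d0 by simp
      then show ?thesis unfolding mem t0_def using True ij by simp
    next
      case False
      then have d00: "d = 0" using d0 by simp
      have "(d - int (n - k + 1)) mod int n = int k - 1"
      proof -
        have "d - int (n - k + 1) = (int k - 1) + (-1) * int n" using d00 nk by (simp add: of_nat_diff)
        then have "(d - int (n - k + 1)) mod int n = (int k - 1) mod int n" by (metis mod_mult_self1)
        then show ?thesis using nk k3 by simp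
      qed
      then show ?thesis unfolding mem t0_def using False by simp
    qed
  next
    fix y assume y: "y \<ge> 1 \<and> (i, (j - 1 + y) mod n + 1) \<in> FF"
    show "t0 \<le> y"
    proof (cases "d \<ge> 1")
      case True then show ?thesis unfolding t0_def using y by simp
    next
      case False
      then have d00: "d = 0" using d0 by simp
      show ?thesis
      proof (rule ccontr)
        assume "\<not> t0 \<le> y"
        then have yl: "y \<le> n - k" using False unfolding t0_def by simp
        have "(d - int y) = (int n - int y) + (-1) * int n" using d00 by simp
        then have "(d - int y) mod int n = (int n - int y) mod int n" by (metis mod_mult_self1)
        also have "\<dots> = int n - int y" using y yl nk by (intro mod_pos_pos_trivial) auto
        finally have "(d - int y) mod int n \<ge> int k" using yl nk by simp
        then show False using y mem by simp
      qed
    qed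
  qed
  then show ?thesis unfolding sR_def t0_def by simp
qed

lemma addmod: "((int i - int j) mod int n + int t) mod int n = (int i + int t - int j) mod int n"
proof -
  have "((int i - int j) mod int n + int t) mod int n = ((int i - int j) + int t) mod int n"
    by (rule mod_add_left_eq)
  then show ?thesis by (simp add: algebra_simps)
qed

lemma sC_F:
  assumes x: "(i, j) \<in> FF"
  defines "d \<equiv> (int i - int j) mod int n"
  shows "sC n FF (i, j) = ((i - 1 + (if d < int k - 1 then 1 else n - k + 1)) mod n + 1, j)"
proof -
  have ij: "1 \<le> i" "i \<le> n" "1 \<le> j" "j \<le> n" "d < int k" using x unfolding FF_mem d_def by auto
  have d0: "0 \<le> d" "d < int n" unfolding d_def using n_pos by simp_all
  have mem: "((i - 1 + t) mod n + 1, j) \<in> FF \<longleftrightarrow> (d + int t) mod int n < int k" for t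
  proof -
    have "(i - 1 + t) mod n + 1 \<le> n" using n_pos by (simp add: Suc_leI)
    then show ?thesis unfolding FF_mem using ij row_shift[OF ij(1), of t j] unfolding d_def
      by (simp add: addmod)
  qed
  define t0 where "t0 = (if d < int k - 1 then 1 else n - k + 1)"
  have "(LEAST t. t \<ge> 1 \<and> ((i - 1 + t) mod n + 1, j) \<in> FF) = t0"
  proof (rule Least_equality)
    show "t0 \<ge> 1 \<and> ((i - 1 + t0) mod n + 1, j) \<in> FF"
    proof (cases "d < int k - 1")
      case True
      then have "(d + 1) mod int n = d + 1" using d0 nk by (intro mod_pos_pos_trivial) auto
      then show ?thesis unfolding mem t0_def using True by simp
    next
      case False
      then have dk: "d = int k - 1" using ij by simp
      have "(d + int (n - k + 1)) mod int n = 0" using dk nk by (simp add: of_nat_diff)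
      then show ?thesis unfolding mem t0_def using False k3 by simp
    qed
  next
    fix y assume y: "y \<ge> 1 \<and> ((i - 1 + y) mod n + 1, j) \<in> FF"
    show "t0 \<le> y"
    proof (cases "d < int k - 1")
      case True then show ?thesis unfolding t0_def using y by simp
    next
      case False
      then have dk: "d = int k - 1" using ij by simp
      show ?thesis
      proof (rule ccontr)
        assume "\<not> t0 \<le> y"
        then have yl: "y \<le> n - k" using False unfolding t0_def by simp
        have "(d + int y) mod int n = d + int y" using dk y yl nk by (intro mod_pos_pos_trivial) auto
        then have "(d + int y) mod int n \<ge> int k" using dk y by simp
        then show False using y mem by simp
      qed
    qed
  qed
  then show ?thesis unfolding sC_def t0_def by simp
qed

definition SR where "SR y = (fst y, if snd y \<ge> 1 then snd y - 1 else k - 1)"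
definition SRi where "SRi y = (fst y, if snd y < k - 1 then snd y + 1 else 0)"
definition SC where "SC y = (if snd y < k - 1 then ((fst y + 1) mod n, snd y + 1) else ((fst y + (n + 1 - k)) mod n, 0))"
definition TT where "TT y = SC (if fst y \<in> E0 then SRi y else SR y)"

lemma bt_dist: "x \<in> FF \<Longrightarrow> snd (bt x) = nat ((int (fst x) - int (snd x)) mod int n)" unfolding bt_def by simp

lemma sR_bt: assumes x: "x \<in> FF" shows "sR n FF x \<in> FF \<and> bt (sR n FF x) = SR (bt x)"
proof -
  obtain i j where ij0: "x = (i, j)" by (cases x)
  have x': "(i, j) \<in> FF" using x ij0 by simp
  have ij: "1 \<le> i" "i \<le> n" "1 \<le> j" "j \<le> n" "(int i - int j) mod int n < int k" using x' unfolding FF_mem by auto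
  define d where "d = (int i - int j) mod int n"
  have d0: "0 \<le> d" "d < int n" unfolding d_def using n_pos by simp_all
  define t0 where "t0 = (if d \<ge> 1 then 1 else n - k + 1)"
  define j' where "j' = (j - 1 + t0) mod n + 1"
  have s: "sR n FF (i, j) = (i, j')" unfolding j'_def t0_def d_def using sR_F[OF x'] by simp
  have dj: "(int i - int j') mod int n = (d - int t0) mod int n"
    unfolding j'_def using col_shift[OF ij(3), of i t0] unfolding d_def by (simp add: mod_diff_left_eq)
  have j'r: "1 \<le> j'" "j' \<le> n" unfolding j'_def using n_pos by (simp_all add: Suc_leI)
  have val: "(d - int t0) mod int n = (if d \<ge> 1 then d - 1 else int k - 1)"
  proof (cases "d \<ge> 1")
    case True then show ?thesis unfolding t0_def using d0 by (simp add: mod_pos_pos_trivial)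
  next
    case False
    then have d00: "d = 0" using d0 by simp
    have "d - int (n - k + 1) = (int k - 1) + (-1) * int n" using d00 nk by (simp add: of_nat_diff)
    then have "(d - int (n - k + 1)) mod int n = (int k - 1) mod int n" by (metis mod_mult_self1)
    then show ?thesis unfolding t0_def using False nk k3 by simp
  qed
  have inF: "(i, j') \<in> FF" unfolding FF_mem using ij j'r dj val d0 ij(5) unfolding d_def by auto
  have "bt (i, j') = SR (bt (i, j))"
    unfolding bt_def SR_def using dj val d0 unfolding d_def by (auto simp: nat_diff_distrib)
  then show ?thesis using s inF ij0 by simp
qed

lemma sC_bt: assumes x: "x \<in> FF" shows "sC n FF x \<in> FF \<and> bt (sC n FF x) = SC (bt x)"
proof -
  obtain i j where ij0: "x = (i, j)" by (cases x)
  have x': "(i, j) \<in> FF" using x ij0 by simp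
  have ij: "1 \<le> i" "i \<le> n" "1 \<le> j" "j \<le> n" "(int i - int j) mod int n < int k" using x' unfolding FF_mem by auto
  define d where "d = (int i - int j) mod int n"
  have d0: "0 \<le> d" "d < int n" "d < int k" unfolding d_def using n_pos ij by simp_all
  define t0 where "t0 = (if d < int k - 1 then 1 else n - k + 1)"
  define i' where "i' = (i - 1 + t0) mod n + 1"
  have s: "sC n FF (i, j) = (i', j)" unfolding i'_def t0_def d_def using sC_F[OF x'] by simp
  have di: "(int i' - int j) mod int n = (d + int t0) mod int n"
    unfolding i'_def using row_shift[OF ij(1), of t0 j] unfolding d_def by (simp add: addmod)
  have i'r: "1 \<le> i'" "i' \<le> n" unfolding i'_def using n_pos by (simp_all add: Suc_leI)
  have val: "(d + int t0) mod int n = (if d < int k - 1 then d + 1 else 0)"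
  proof (cases "d < int k - 1")
    case True then show ?thesis unfolding t0_def using d0 nk by (simp add: mod_pos_pos_trivial)
  next
    case False
    then have dk: "d = int k - 1" using d0 by simp
    then show ?thesis unfolding t0_def using False nk k3 by (simp add: of_nat_diff)
  qed
  have inF: "(i', j) \<in> FF" unfolding FF_mem using ij i'r di val d0 k3 unfolding d_def by auto
  have row: "i' - 1 = (i - 1 + t0) mod n" unfolding i'_def by simp
  have "bt (i', j) = SC (bt (i, j))"
  proof (cases "d < int k - 1")
    case True
    then have "nat d < k - 1" using d0 k3 by (simp add: nat_less_iff of_nat_diff)
    then show ?thesis unfolding bt_def SC_def using di val row True d0 unfolding d_def t0_def
      by (auto simp: nat_add_distrib)
  next
    case False
    then have "\<not> nat d < k - 1" using d0 k3 by (simp add: nat_less_iff of_nat_diff)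
    moreover have "i - 1 + (n - k + 1) = i - 1 + (n + 1 - k)" using nk by simp
    ultimately show ?thesis unfolding bt_def SC_def using di val row False unfolding d_def t0_def
      by auto
  qed
  then show ?thesis using s inF ij0 by simp
qed

end

context P3 begin

lemma GG_mem: "(a, d) \<in> GG \<longleftrightarrow> a < n \<and> d < k" unfolding GG_def by auto

lemma bt_GG: assumes x: "x \<in> FF" shows "bt x \<in> GG"
proof -
  obtain i j where ij0: "x = (i, j)" by (cases x)
  have ij: "1 \<le> i" "i \<le> n" "(int i - int j) mod int n < int k" using x unfolding ij0 FF_mem by auto
  have "0 \<le> (int i - int j) mod int n" using n_pos by simp
  then have "nat ((int i - int j) mod int n) < k" using ij(3) by linarith
  then show ?thesis unfolding bt_def GG_mem ij0 using ij by simp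
qed

lemma bti_FF: assumes y: "y \<in> GG" shows "bti y \<in> FF \<and> bt (bti y) = y"
proof -
  obtain a d where ad0: "y = (a, d)" by (cases y)
  have ad: "a < n" "d < k" using y unfolding ad0 GG_mem by auto
  have dn: "d < n" using ad nk by simp
  have i1: "int ((a + n - d) mod n) = (int a + int n - int d) mod int n" using dn by (simp add: zmod_int of_nat_diff)
  have "(int (a + 1) - int ((a + n - d) mod n + 1)) mod int n = (int a - (int a + int n - int d) mod int n) mod int n"
    using i1 by simp
  also have "\<dots> = (int a - (int a + int n - int d)) mod int n" by (simp add: mod_diff_right_eq)
  also have "\<dots> = (int d + (-1) * int n) mod int n" by simp
  also have "\<dots> = int d mod int n" by (metis mod_mult_self1)
  also have "\<dots> = int d" using dn by simp
  finally have e: "(int (a + 1) - int ((a + n - d) mod n + 1)) mod int n = int d" .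
  have c: "(a + n - d) mod n + 1 \<le> n" using n_pos by (simp add: Suc_leI)
  have "bti y \<in> FF" unfolding bti_def ad0 FF_mem using e ad c by simp
  moreover have "bt (bti y) = y" unfolding bti_def bt_def ad0 using e by simp
  ultimately show ?thesis by simp
qed

lemma bti_bt: assumes x: "x \<in> FF" shows "bti (bt x) = x"
proof -
  obtain i j where ij0: "x = (i, j)" by (cases x)
  have ij: "1 \<le> i" "i \<le> n" "1 \<le> j" "j \<le> n" using x unfolding ij0 FF_mem by auto
  define D where "D = (int i - int j) mod int n"
  have D0: "0 \<le> D" "D < int n" unfolding D_def using n_pos by simp_all
  have nD: "nat D < n" using D0 by linarith
  have "int ((i - 1 + n - nat D) mod n) = (int i - 1 + int n - D) mod int n"
    using ij nD D0 by (simp add: zmod_int of_nat_diff algebra_simps)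
  also have "\<dots> = (int i - 1 + int n - (int i - int j)) mod int n"
    unfolding D_def by (metis mod_diff_right_eq)
  also have "\<dots> = ((int j - 1) + 1 * int n) mod int n" by (simp add: algebra_simps)
  also have "\<dots> = (int j - 1) mod int n" by (simp only: mod_mult_self1)
  also have "\<dots> = int j - 1" using ij by simp
  finally have e: "(i - 1 + n - nat D) mod n = j - 1" using ij by linarith
  show ?thesis unfolding bti_def bt_def ij0 using ij e unfolding D_def by simp
qed

lemma bt_bij: "bij_betw bt FF GG"
proof (rule bij_betw_byWitness[where f' = bti])
  show "\<forall>a\<in>FF. bti (bt a) = a" using bti_bt by blast
  show "\<forall>a'\<in>GG. bt (bti a') = a'" using bti_FF by blast
  show "bt ` FF \<subseteq> GG" using bt_GG by blast
  show "bti ` GG \<subseteq> FF" using bti_FF by blast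
qed

lemma bt_inj: "x \<in> FF \<Longrightarrow> y \<in> FF \<Longrightarrow> bt x = bt y \<Longrightarrow> x = y"
  using bti_bt by metis

lemma SRi_GG: "y \<in> GG \<Longrightarrow> SRi y \<in> GG" unfolding SRi_def GG_def by auto
lemma SR_SRi: "y \<in> GG \<Longrightarrow> SR (SRi y) = y" unfolding SRi_def SR_def GG_def by auto

lemma sR_inj: "inj_on (sR n FF) FF"
proof (rule inj_onI)
  fix x y assume xy: "x \<in> FF" "y \<in> FF" "sR n FF x = sR n FF y"
  then have "SR (bt x) = SR (bt y)" using sR_bt by metis
  then have "SRi (SR (bt x)) = SRi (SR (bt y))" by simp
  moreover have "SRi (SR z) = z" if "z \<in> GG" for z using that unfolding SRi_def SR_def GG_def by auto
  ultimately have "bt x = bt y" using bt_GG xy by metis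
  then show "x = y" using bt_inj xy by blast
qed

lemma inv_sR: assumes y: "y \<in> FF"
  shows "inv_into FF (sR n FF) y \<in> FF \<and> bt (inv_into FF (sR n FF) y) = SRi (bt y)"
proof -
  define x0 where "x0 = bti (SRi (bt y))"
  have g: "SRi (bt y) \<in> GG" using SRi_GG bt_GG y by blast
  have x0F: "x0 \<in> FF" and bx0: "bt x0 = SRi (bt y)" unfolding x0_def using bti_FF[OF g] by auto
  have "bt (sR n FF x0) = SR (bt x0)" using sR_bt x0F by blast
  also have "\<dots> = bt y" using bx0 SR_SRi bt_GG y by simp
  finally have "sR n FF x0 = y" using bt_inj sR_bt x0F y by blast
  then have "inv_into FF (sR n FF) y = x0" using inv_into_f_eq[OF sR_inj x0F] by blast
  then show ?thesis using x0F bx0 by simp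
qed

definition CNmap where "CNmap = CN n n FF (\<lambda>i. if i \<in> Eset then -1 else 1) (\<lambda>_. 1)"

lemma CN_eq: "CNmap (i, j) = sC n FF (if i \<in> Eset then inv_into FF (sR n FF) (i, j) else sR n FF (i, j))"
  unfolding CNmap_def CN_def ipow_def by (simp add: Let_def)

lemma CN_bt: assumes x: "x \<in> FF" shows "CNmap x \<in> FF \<and> bt (CNmap x) = TT (bt x)"
proof -
  obtain i j where ij0: "x = (i, j)" by (cases x)
  have i1: "1 \<le> i" using x unfolding ij0 FF_mem by auto
  have fb: "fst (bt x) = i - 1" unfolding bt_def ij0 by simp
  have ei: "i \<in> Eset \<longleftrightarrow> i - 1 \<in> E0" using Eset_E0[of "i - 1"] i1 by simp
  define z where "z = (if i \<in> Eset then inv_into FF (sR n FF) (i, j) else sR n FF (i, j))"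
  have zF: "z \<in> FF" and bz: "bt z = (if fst (bt x) \<in> E0 then SRi (bt x) else SR (bt x))"
    unfolding z_def using inv_sR sR_bt x ij0 ei fb by auto
  have "CNmap x = sC n FF z" unfolding ij0 z_def CN_eq by simp
  then show ?thesis using sC_bt[OF zF] bz unfolding TT_def by simp
qed

lemma level0: "is_tour CNmap FF \<longleftrightarrow> is_tour TT GG"
  by (rule tour_conj[OF bt_bij]) (use CN_bt in auto)

end

context P3 begin

lemma TT_E: "a \<in> E0 \<Longrightarrow> d < k \<Longrightarrow> TT (a, d) =
   (if d + 2 < k then ((a + 1) mod n, d + 2) else if d + 2 = k then ((a + (n + 1 - k)) mod n, 0) else ((a + 1) mod n, 1))"
  unfolding TT_def SC_def SRi_def using k3 by auto

lemma TT_N: "a \<notin> E0 \<Longrightarrow> d < k \<Longrightarrow> TT (a, d) = (if d \<ge> 1 then ((a + 1) mod n, d) else ((a + (n + 1 - k)) mod n, 0))"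
  unfolding TT_def SC_def SR_def using k3 by auto

lemma TT_GG: "y \<in> GG \<Longrightarrow> TT y \<in> GG"
proof -
  assume y: "y \<in> GG"
  obtain a d where ad: "y = (a, d)" by (cases y)
  have a: "a < n" and d: "d < k" using y unfolding ad GG_mem by auto
  show ?thesis
  proof (cases "a \<in> E0")
    case True then show ?thesis unfolding ad TT_E[OF True d] GG_def using n_pos k3 d by auto
  next
    case False then show ?thesis unfolding ad TT_N[OF False d] GG_def using n_pos k3 d by auto
  qed
qed

definition TTi where "TTi y = (if snd y = 0 then (let a = (fst y + (k - 1)) mod n in if a \<in> E0 then (a, k - 2) else (a, 0))
   else (let a = (fst y + (n - 1)) mod n in if a \<in> E0 then (a, if snd y = 1 then k - 1 else snd y - 2) else (a, snd y)))"

lemma modback1: "a < n \<Longrightarrow> ((a + 1) mod n + (n - 1)) mod n = a"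
proof -
  assume a: "a < n"
  have "((a + 1) mod n + (n - 1)) mod n = (a + 1 + (n - 1)) mod n" by (simp add: mod_add_left_eq)
  also have "a + 1 + (n - 1) = a + n" using a by simp
  finally show ?thesis using a by simp
qed

lemma modback2: "a < n \<Longrightarrow> ((a + (n + 1 - k)) mod n + (k - 1)) mod n = a"
proof -
  assume a: "a < n"
  have "((a + (n + 1 - k)) mod n + (k - 1)) mod n = (a + (n + 1 - k) + (k - 1)) mod n" by (simp add: mod_add_left_eq)
  also have "a + (n + 1 - k) + (k - 1) = a + n" using nk k3 by simp
  finally show ?thesis using a by simp
qed

lemma TTi_TT: "y \<in> GG \<Longrightarrow> TTi (TT y) = y"
proof -
  assume y: "y \<in> GG"
  obtain a d where ad: "y = (a, d)" by (cases y)
  have a: "a < n" and d: "d < k" using y unfolding ad GG_mem by auto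
  show ?thesis
  proof (cases "a \<in> E0")
    case True
    then show ?thesis unfolding ad TT_E[OF True d] TTi_def using modback1[OF a] modback2[OF a] True d k3
      by (auto simp: Let_def)
  next
    case False
    then show ?thesis unfolding ad TT_N[OF False d] TTi_def using modback1[OF a] modback2[OF a] False d k3
      by (auto simp: Let_def)
  qed
qed

lemma TT_inj: "inj_on TT GG"
  by (rule inj_on_inverseI[where g = TTi]) (rule TTi_TT)

lemma jmp_add: "jmp s (jmp t x) = jmp (s + t) x"
proof -
  define c where "c = n + 1 - k"
  have "jmp s (jmp t x) = ((x + t * c) mod n + s * c) mod n" unfolding jmp_def c_def by simp
  also have "\<dots> = (x + t * c + s * c) mod n" by (simp add: mod_add_left_eq)
  also have "x + t * c + s * c = x + (s + t) * c" by (simp add: algebra_simps)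
  finally show ?thesis unfolding jmp_def c_def .
qed

lemma jmp0: "x < n \<Longrightarrow> jmp 0 x = x" unfolding jmp_def by simp
lemma jmp_lt: "jmp t x < n" unfolding jmp_def using n_pos by simp

lemma walk: "b < n \<Longrightarrow> 1 \<le> c \<Longrightarrow> c < k \<Longrightarrow> (\<forall>s<t. (b + s) mod n \<notin> E0) \<Longrightarrow> (TT ^^ t) (b, c) = ((b + t) mod n, c)"
proof (induction t)
  case 0 then show ?case by simp
next
  case (Suc t)
  then have IH: "(TT ^^ t) (b, c) = ((b + t) mod n, c)" by simp
  have nE: "(b + t) mod n \<notin> E0" using Suc.prems by simp
  have "(TT ^^ Suc t) (b, c) = TT ((b + t) mod n, c)" using IH by simp
  also have "\<dots> = (((b + t) mod n + 1) mod n, c)" using TT_N[OF nE Suc.prems(3)] Suc.prems by simp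
  also have "((b + t) mod n + 1) mod n = (b + Suc t) mod n" by (simp add: mod_Suc_eq)
  finally show ?case .
qed

lemma jump: "b < n \<Longrightarrow> (\<forall>s<t. jmp s b \<notin> E0) \<Longrightarrow> (TT ^^ t) (b, 0) = (jmp t b, 0)"
proof (induction t)
  case 0 then show ?case using jmp0 by simp
next
  case (Suc t)
  then have IH: "(TT ^^ t) (b, 0) = (jmp t b, 0)" by simp
  have nE: "jmp t b \<notin> E0" using Suc.prems by simp
  have "(TT ^^ Suc t) (b, 0) = TT (jmp t b, 0)" using IH by simp
  also have "\<dots> = ((jmp t b + (n + 1 - k)) mod n, 0)" using TT_N[OF nE] k3 by simp
  also have "(jmp t b + (n + 1 - k)) mod n = jmp (Suc t) b" using jmp_add[of 1 t b] unfolding jmp_def by simp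
  finally show ?case .
qed

end

context P3 begin

definition gap where "gap p = (if p + 1 < N0 then erow (p + 1) - erow p else erow 0 + n - erow p)"

lemma E0_iff: "x \<in> E0 \<longleftrightarrow> (\<exists>p<N0. x = erow p)" unfolding E0_def by auto

lemma gap_props:
  assumes p: "p < N0"
  shows "1 \<le> gap p" and "(erow p + gap p) mod n = erow ((p + 1) mod N0)"
    and "\<And>t. 0 < t \<Longrightarrow> t < gap p \<Longrightarrow> (erow p + t) mod n \<notin> E0"
proof -
  have N0p: "0 < N0" using N0_gt by simp
  have ep: "erow p < n" using erow_lt p by blast
  show "1 \<le> gap p"
  proof (cases "p + 1 < N0")
    case True then show ?thesis unfolding gap_def using erow_mono[of p "p+1"] by simp
  next
    case False
    have "erow 0 \<le> erow p" using erow_mono[of 0 p] p by (cases "p = 0") auto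
    then show ?thesis unfolding gap_def using False ep by simp
  qed
  show "(erow p + gap p) mod n = erow ((p + 1) mod N0)"
  proof (cases "p + 1 < N0")
    case True
    have "erow p < erow (p + 1)" using erow_mono[of p "p+1"] True by simp
    then show ?thesis unfolding gap_def using True erow_lt[OF True] by simp
  next
    case False
    then have pN: "p + 1 = N0" using p by simp
    have "erow 0 \<le> erow p" using erow_mono[of 0 p] p by (cases "p = 0") auto
    then have "erow p + (erow 0 + n - erow p) = erow 0 + n" using ep by simp
    then show ?thesis unfolding gap_def using False pN erow_lt[OF N0p] by simp
  qed
  fix t assume t: "0 < t" "t < gap p"
  show "(erow p + t) mod n \<notin> E0"
  proof
    assume "(erow p + t) mod n \<in> E0"
    then obtain p' where p': "p' < N0" "(erow p + t) mod n = erow p'" unfolding E0_iff by blast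
    show False
    proof (cases "p + 1 < N0")
      case True
      have lt: "erow p + t < erow (p + 1)" using t True unfolding gap_def by simp
      then have "erow p + t < n" using erow_lt[OF True] by simp
      then have "erow p' = erow p + t" using p' by simp
      then have "erow p < erow p'" "erow p' < erow (p + 1)" using t lt by auto
      then have "p < p'" "p' < p + 1" using erow_less_iff p p' True by blast+
      then show False by simp
    next
      case False
      then have pN: "p + 1 = N0" using p by simp
      show False
      proof (cases "erow p + t < n")
        case True
        then have "erow p' = erow p + t" using p' by simp
        then have "erow p < erow p'" using t by simp
        then have "p < p'" using erow_less_iff p p' by blast
        then show False using pN p' by simp
      next
        case False
        have tl: "t < erow 0 + n - erow p" using t \<open>\<not> p + 1 < N0\<close> unfolding gap_def by simp
        have "erow p + t < 2 * n" using ep tl erow_lt[OF N0p] by simp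
        then have "(erow p + t) mod n = erow p + t - n" using False
          by (simp add: mod_if le_mod_geq)
        then have "erow p' < erow 0" using p' tl False by simp
        then have "p' < 0" using erow_less_iff p' N0p by blast
        then show False by simp
      qed
    qed
  qed
qed

end

context P3 begin

lemma funpow_pred: "0 < t \<Longrightarrow> (ff ^^ t) x = (ff ^^ (t - 1)) (ff x)"
proof (cases t)
  case (Suc t') then show ?thesis by (simp add: funpow_Suc_right del: funpow.simps)
qed simp

definition Cidx where "Cidx p = (if p + g < N0 then p + g else p mod g)"
definition UU where "UU y = (if snd y + 2 = k then (Cidx (fst y), 0) else ((fst y + 1) mod N0, (snd y + 2) mod k))"
definition emap where "emap y = (erow (fst y), snd y)"
definition PP where "PP = {0..<N0} \<times> {0..<k}"
definition S1 where "S1 = {y \<in> GG. fst y \<in> E0}"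
definition einv where "einv y = (the_inv_into {0..<N0} erow (fst y), snd y)"
definition psi1 where "psi1 y = emap (UU (einv y))"

lemma Cidx_lt: "p < N0 \<Longrightarrow> Cidx p < N0"
proof -
  have "p mod g < g" using g_pos by simp
  then show "p < N0 \<Longrightarrow> Cidx p < N0" unfolding Cidx_def using N0_gt by auto
qed

lemma kk: "Suc k mod k = 1"
proof -
  have "(1 + k) mod k = 1 mod k" by (rule mod_add_self2)
  then show ?thesis using k3 by simp
qed

lemma TT_erow_jmp: "p < N0 \<Longrightarrow> TT (erow p, k - 2) = (jmp 1 (erow p), 0)"
proof -
  assume p: "p < N0"
  have "erow p \<in> E0" unfolding E0_iff using p by blast
  then show ?thesis using TT_E[of "erow p" "k - 2"] k3 unfolding jmp_def by simp
qed

lemma ret1a: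
  assumes p: "p < N0" and d: "d < k" and False: "d + 2 \<noteq> k"
  shows "\<exists>\<tau>\<ge>1. (TT ^^ \<tau>) (erow p, d) = emap (UU (p, d)) \<and> (\<forall>t. 0 < t \<longrightarrow> t < \<tau> \<longrightarrow> (TT ^^ t) (erow p, d) \<notin> S1)"
proof -
  define c where "c = (d + 2) mod k"
  have cc: "c = (if d + 2 < k then d + 2 else 1)"
  proof (cases "d + 2 < k")
    case True then show ?thesis unfolding c_def by simp
  next
    case F2: False
    then have "d + 2 = Suc k" using False d by simp
    then show ?thesis unfolding c_def using F2 kk by simp
  qed
  have c: "1 \<le> c" "c < k" unfolding cc using k3 by auto
  have eE: "erow p \<in> E0" unfolding E0_iff using p by blast
  define b where "b = (erow p + 1) mod n"
  have b: "b < n" unfolding b_def using n_pos by simp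
  have T1: "TT (erow p, d) = (b, c)"
  proof -
    show ?thesis
    proof (cases "d + 2 < k")
      case True then show ?thesis unfolding b_def cc using TT_E[OF eE d] by simp
    next
      case F2: False then show ?thesis unfolding b_def cc using TT_E[OF eE d] False by simp
    qed
  qed
  note gp = gap_props(1,2)[OF p]
  note gb = gap_props(3)[OF p]
  have bs: "(b + s) mod n = (erow p + (s + 1)) mod n" for s unfolding b_def by (simp add: mod_add_left_eq)
  have path: "(TT ^^ t) (erow p, d) = ((erow p + t) mod n, c)" if t: "0 < t" "t \<le> gap p" for t
  proof -
    have "\<forall>s<t - 1. (b + s) mod n \<notin> E0"
    proof (intro allI impI)
      fix s assume "s < t - 1"
      then have "0 < s + 1" "s + 1 < gap p" using t by auto
      then show "(b + s) mod n \<notin> E0" unfolding bs by (rule gb)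
    qed
    then have w: "(TT ^^ (t - 1)) (b, c) = ((b + (t - 1)) mod n, c)" by (rule walk[OF b c])
    have "(TT ^^ t) (erow p, d) = (TT ^^ (t - 1)) (TT (erow p, d))"
      by (rule funpow_pred) (use t in simp)
    also have "\<dots> = ((b + (t - 1)) mod n, c)" using T1 w by simp
    also have "(b + (t - 1)) mod n = (erow p + t) mod n" unfolding bs using t by simp
    finally show ?thesis .
  qed
  show ?thesis
  proof (intro exI conjI allI impI)
    show "1 \<le> gap p" using gp by simp
    show "(TT ^^ gap p) (erow p, d) = emap (UU (p, d))"
      using path[of "gap p"] gp False unfolding UU_def emap_def c_def by simp
    fix t assume "0 < t" "t < gap p"
    then show "(TT ^^ t) (erow p, d) \<notin> S1" using path gb unfolding S1_def by simp
  qed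
qed
lemma ret1b:
  assumes p: "p < N0" and d: "d < k" and dk2: "d + 2 = k"
  shows "\<exists>\<tau>\<ge>1. (TT ^^ \<tau>) (erow p, d) = emap (UU (p, d)) \<and> (\<forall>t. 0 < t \<longrightarrow> t < \<tau> \<longrightarrow> (TT ^^ t) (erow p, d) \<notin> S1)"
proof -
  have dk: "d = k - 2" using dk2 by simp
  have T1: "TT (erow p, d) = (jmp 1 (erow p), 0)" using TT_erow_jmp[OF p] dk by simp
  have jl: "jmp 1 (erow p) < n" by (rule jmp_lt)
  show ?thesis
  proof (cases "p + g < N0")
    case True
    have "(TT ^^ 1) (erow p, d) = emap (UU (p, d))"
      using T1 orb1[OF p True] unfolding UU_def emap_def Cidx_def using True dk2 by simp
    then show ?thesis by (intro exI[of _ 1]) simp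
  next
    case False
    define M where "M = m - p div g"
    have M1: "1 \<le> M" unfolding M_def using orb3(2)[OF p False] .
    have path: "(TT ^^ t) (erow p, d) = (jmp t (erow p), 0)" if t: "0 < t" "t \<le> M" for t
    proof -
      have "\<forall>s<t - 1. jmp s (jmp 1 (erow p)) \<notin> E0"
      proof (intro allI impI)
        fix s assume "s < t - 1"
        then have "1 \<le> s + 1" "s + 1 < m - p div g" using t unfolding M_def by auto
        then show "jmp s (jmp 1 (erow p)) \<notin> E0" using orb2[OF p False] jmp_add by simp
      qed
      then have w: "(TT ^^ (t - 1)) (jmp 1 (erow p), 0) = (jmp (t - 1) (jmp 1 (erow p)), 0)" by (rule jump[OF jl])
      have "(TT ^^ t) (erow p, d) = (TT ^^ (t - 1)) (TT (erow p, d))"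
        by (rule funpow_pred) (use t in simp)
      also have "\<dots> = (jmp (t - 1) (jmp 1 (erow p)), 0)" using T1 w by simp
      also have "jmp (t - 1) (jmp 1 (erow p)) = jmp t (erow p)" using jmp_add t by simp
      finally show ?thesis .
    qed
    show ?thesis
    proof (intro exI conjI allI impI)
      show "1 \<le> M" by (rule M1)
      have pM: "(TT ^^ M) (erow p, d) = (jmp M (erow p), 0)" using path[of M] M1 by simp
      show "(TT ^^ M) (erow p, d) = emap (UU (p, d))"
        unfolding pM using M1 orb3(1)[OF p False] dk2 False
        unfolding UU_def emap_def Cidx_def M_def by simp
      fix t assume t: "0 < t" "t < M"
      then have "jmp t (erow p) \<notin> E0" using orb2[OF p False] unfolding M_def by simp
      then show "(TT ^^ t) (erow p, d) \<notin> S1" using path t unfolding S1_def by simp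
    qed
  qed
qed

lemma ret1:
  assumes p: "p < N0" and d: "d < k"
  shows "\<exists>\<tau>\<ge>1. (TT ^^ \<tau>) (erow p, d) = emap (UU (p, d)) \<and> (\<forall>t. 0 < t \<longrightarrow> t < \<tau> \<longrightarrow> (TT ^^ t) (erow p, d) \<notin> S1)"
proof (cases "d + 2 = k")
  case True then show ?thesis by (rule ret1b[OF p d])
next
  case False then show ?thesis by (rule ret1a[OF p d])
qed
end

context P3 begin

declare GG_mem[simp]

lemma S1_sub: "S1 \<subseteq> GG" unfolding S1_def by auto
lemma GG_fin: "finite GG" unfolding GG_def by simp
lemma PP_mem[simp]: "(p, d) \<in> PP \<longleftrightarrow> p < N0 \<and> d < k" unfolding PP_def by auto

lemma erow_inv: "p < N0 \<Longrightarrow> the_inv_into {0..<N0} erow (erow p) = p"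
  using the_inv_into_f_f[OF erow_inj] by simp

lemma E0_inv: "a \<in> E0 \<Longrightarrow> the_inv_into {0..<N0} erow a < N0 \<and> erow (the_inv_into {0..<N0} erow a) = a"
proof -
  assume "a \<in> E0"
  then obtain p where p: "p < N0" "a = erow p" unfolding E0_iff by blast
  then show ?thesis using erow_inv by simp
qed

lemma emap_S1: "x \<in> PP \<Longrightarrow> emap x \<in> S1 \<and> einv (emap x) = x"
proof -
  assume x: "x \<in> PP"
  obtain p d where pd: "x = (p, d)" by (cases x)
  have p: "p < N0" and d: "d < k" using x unfolding pd PP_mem by auto
  have "erow p \<in> E0" unfolding E0_iff using p by blast
  then show ?thesis unfolding pd emap_def einv_def S1_def GG_mem using p d erow_lt erow_inv by simp
qed

lemma einv_PP: "y \<in> S1 \<Longrightarrow> einv y \<in> PP \<and> emap (einv y) = y"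
proof -
  assume y: "y \<in> S1"
  obtain a d where ad: "y = (a, d)" by (cases y)
  have a: "a \<in> E0" and d: "d < k" using y unfolding ad S1_def GG_mem by auto
  show ?thesis unfolding ad einv_def emap_def PP_mem using E0_inv[OF a] d by simp
qed

lemma UU_PP: "x \<in> PP \<Longrightarrow> UU x \<in> PP"
proof -
  assume x: "x \<in> PP"
  obtain p d where pd: "x = (p, d)" by (cases x)
  have p: "p < N0" and d: "d < k" using x unfolding pd PP_mem by auto
  show ?thesis
  proof (cases "d + 2 = k")
    case True then show ?thesis unfolding pd UU_def using Cidx_lt[OF p] by simp
  next
    case False then show ?thesis unfolding pd UU_def using N0_gt k3 by simp
  qed
qed

lemma psi1_S1: "y \<in> S1 \<Longrightarrow> psi1 y \<in> S1"
  unfolding psi1_def using einv_PP UU_PP emap_S1 by blast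

lemma walk_reach: "a < n \<Longrightarrow> 1 \<le> d \<Longrightarrow> d < k \<Longrightarrow> \<exists>t. (TT ^^ t) (a, d) \<in> S1"
proof -
  assume a: "a < n" and d: "1 \<le> d" "d < k"
  define P where "P s \<longleftrightarrow> (a + s) mod n \<in> E0" for s
  have N0p: "0 < N0" using N0_gt by simp
  have "(a + (erow 0 + n - a)) mod n = erow 0" using a erow_lt[OF N0p] by simp
  then have "P (erow 0 + n - a)" unfolding P_def E0_iff using N0p by auto
  then have ex: "\<exists>s. P s" by blast
  define t where "t = (LEAST s. P s)"
  have Pt: "P t" unfolding t_def using LeastI_ex[OF ex] .
  have nP: "\<forall>s<t. \<not> P s" unfolding t_def using not_less_Least by blast
  have "(TT ^^ t) (a, d) = ((a + t) mod n, d)" by (rule walk[OF a d]) (use nP P_def in blast)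
  then have "(TT ^^ t) (a, d) \<in> S1" unfolding S1_def GG_mem using Pt d n_pos unfolding P_def by simp
  then show ?thesis by blast
qed

lemma jump_reach: "a < n \<Longrightarrow> \<exists>t. (TT ^^ t) (a, 0) \<in> S1"
proof -
  assume a: "a < n"
  define P where "P s \<longleftrightarrow> jmp s a \<in> E0" for s
  have ex: "\<exists>s. P s" unfolding P_def using jmp_reach[OF a] .
  define t where "t = (LEAST s. P s)"
  have Pt: "P t" unfolding t_def using LeastI_ex[OF ex] .
  have nP: "\<forall>s<t. \<not> P s" unfolding t_def using not_less_Least by blast
  have "(TT ^^ t) (a, 0) = (jmp t a, 0)" by (rule jump[OF a]) (use nP P_def in blast)
  then have "(TT ^^ t) (a, 0) \<in> S1" unfolding S1_def GG_mem using Pt k3 jmp_lt unfolding P_def by simp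
  then show ?thesis by blast
qed

lemma reach1: "y \<in> GG \<Longrightarrow> \<exists>t. (TT ^^ t) y \<in> S1"
proof -
  assume y: "y \<in> GG"
  obtain a d where ad: "y = (a, d)" by (cases y)
  have a: "a < n" and d: "d < k" using y unfolding ad GG_mem by auto
  show ?thesis
  proof (cases "a \<in> E0")
    case True
    then have "(TT ^^ 0) y \<in> S1" using y unfolding ad S1_def by simp
    then show ?thesis by blast
  next
    case False
    show ?thesis
    proof (cases "d = 0")
      case True then show ?thesis unfolding ad using jump_reach[OF a] by simp
    next
      case False then show ?thesis unfolding ad using walk_reach[OF a _ d] by simp
    qed
  qed
qed

lemma level1: "is_tour TT GG \<longleftrightarrow> is_tour psi1 S1"
proof (rule tour_return[OF GG_fin TT_GG TT_inj S1_sub reach1 psi1_S1])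
  fix x assume x: "x \<in> S1"
  obtain p d where pd: "einv x = (p, d)" by (cases "einv x")
  have pP: "(p, d) \<in> PP" and ex: "emap (p, d) = x" using einv_PP[OF x] pd by auto
  have p: "p < N0" and d: "d < k" using pP unfolding PP_mem by auto
  have xe: "x = (erow p, d)" using ex unfolding emap_def by simp
  have "psi1 x = emap (UU (p, d))" unfolding psi1_def pd by simp
  then show "\<exists>\<tau>\<ge>1. (TT ^^ \<tau>) x = psi1 x \<and> (\<forall>t. 0 < t \<longrightarrow> t < \<tau> \<longrightarrow> (TT ^^ t) x \<notin> S1)"
    unfolding xe using ret1[OF p d] by simp
qed simp_all

lemma emap_bij: "bij_betw emap PP S1"
proof (rule bij_betw_byWitness[where f' = einv])
  show "\<forall>a\<in>PP. einv (emap a) = a" using emap_S1 by blast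
  show "\<forall>a'\<in>S1. emap (einv a') = a'" using einv_PP by blast
  show "emap ` PP \<subseteq> S1" using emap_S1 by blast
  show "einv ` S1 \<subseteq> PP" using einv_PP by blast
qed

lemma level2: "is_tour UU PP \<longleftrightarrow> is_tour psi1 S1"
proof (rule tour_conj[OF emap_bij])
  show "\<And>x. x \<in> PP \<Longrightarrow> UU x \<in> PP" by (rule UU_PP)
  show "\<And>x. x \<in> PP \<Longrightarrow> emap (UU x) = psi1 (emap x)" unfolding psi1_def using emap_S1 by simp
qed

end

context P3 begin

definition S3 where "S3 = {0..<N0} \<times> {0::nat}"
definition psi3 where "psi3 y = (Cidx ((fst y + hh) mod N0), (0::nat))"
definition psi where "psi p = Cidx ((p + hh) mod N0)"

lemma S3_mem[simp]: "(p, d) \<in> S3 \<longleftrightarrow> p < N0 \<and> d = 0" unfolding S3_def by auto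

lemma two_mod_zero: "x < k \<Longrightarrow> (2 * x) mod k = 0 \<Longrightarrow> x = 0"
proof -
  assume x: "x < k" and z: "(2 * x) mod k = 0"
  then have "k dvd 2 * x" by (simp add: mod_eq_0_iff_dvd)
  moreover have "coprime k 2" using kodd by simp
  ultimately have "k dvd x" using coprime_dvd_mult_right_iff by blast
  show "x = 0"
  proof (rule ccontr)
    assume "x \<noteq> 0"
    then have "k \<le> x" using dvd_imp_le \<open>k dvd x\<close> by simp
    then show False using x by simp
  qed
qed

lemma twomod: "x \<le> k - 2 \<Longrightarrow> (2 * x) mod k + 2 \<noteq> k"
proof
  assume x: "x \<le> k - 2" and e: "(2 * x) mod k + 2 = k"
  show False
  proof (cases "2 * x < k")
    case True
    then have "2 * x + 2 = k" using e by simp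
    then have "even k" by presburger
    then show False using kodd by simp
  next
    case False
    then have "(2 * x) mod k = 2 * x - k" using x k3 by (simp add: mod_if le_mod_geq)
    then have "2 * x + 2 = 2 * k" using e False by simp
    then show False using x k3 by simp
  qed
qed

lemma twomod_last: "(2 * (k - 1)) mod k = k - 2"
proof -
  have "2 * (k - 1) = (k - 2) + 1 * k" using k3 by simp
  then have "(2 * (k - 1)) mod k = (k - 2) mod k" by (metis mod_mult_self1)
  then show ?thesis using k3 by simp
qed

lemma UU_path: "p < N0 \<Longrightarrow> c0 + c \<le> k - 1 \<Longrightarrow> (UU ^^ c) (p, (2 * c0) mod k) = ((p + c) mod N0, (2 * (c0 + c)) mod k)"
proof (induction c)
  case 0 then show ?case by simp
next
  case (Suc c)
  then have IH: "(UU ^^ c) (p, (2 * c0) mod k) = ((p + c) mod N0, (2 * (c0 + c)) mod k)" by simp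
  have "c0 + c \<le> k - 2" using Suc.prems by simp
  then have ne: "(2 * (c0 + c)) mod k + 2 \<noteq> k" by (rule twomod)
  have "(UU ^^ Suc c) (p, (2 * c0) mod k) = UU ((p + c) mod N0, (2 * (c0 + c)) mod k)" using IH by simp
  also have "\<dots> = (((p + c) mod N0 + 1) mod N0, ((2 * (c0 + c)) mod k + 2) mod k)"
    unfolding UU_def using ne by simp
  also have "((p + c) mod N0 + 1) mod N0 = (p + Suc c) mod N0" by (simp add: mod_Suc_eq)
  also have "((2 * (c0 + c)) mod k + 2) mod k = (2 * (c0 + c) + 2) mod k" by (rule mod_add_left_eq)
  also have "2 * (c0 + c) + 2 = 2 * (c0 + Suc c)" by simp
  finally show ?case .
qed

lemma UU_last: "p < N0 \<Longrightarrow> c0 < k \<Longrightarrow> (UU ^^ (k - c0)) (p, (2 * c0) mod k) = (Cidx ((p + (k - 1 - c0)) mod N0), 0)"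
proof -
  assume p: "p < N0" and c0: "c0 < k"
  have a: "(UU ^^ (k - 1 - c0)) (p, (2 * c0) mod k) = ((p + (k - 1 - c0)) mod N0, (2 * (k - 1)) mod k)"
    using UU_path[OF p, of c0 "k - 1 - c0"] c0 by simp
  have "k - c0 = Suc (k - 1 - c0)" using c0 by simp
  then have "(UU ^^ (k - c0)) (p, (2 * c0) mod k) = UU ((UU ^^ (k - 1 - c0)) (p, (2 * c0) mod k))" by simp
  also have "\<dots> = (Cidx ((p + (k - 1 - c0)) mod N0), 0)"
  proof -
    have "k - 2 + 2 = k" using k3 by simp
    then show ?thesis unfolding a twomod_last UU_def by simp
  qed
  finally show ?thesis .
qed

lemma PP_fin: "finite PP" unfolding PP_def by simp
lemma S3_sub: "S3 \<subseteq> PP" unfolding S3_def PP_def using k3 by auto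

lemma modinj: "(a::nat) < N \<Longrightarrow> b < N \<Longrightarrow> (a + c) mod N = (b + c) mod N \<Longrightarrow> a = b"
proof -
  assume a: "a < N" and b: "b < N" and e: "(a + c) mod N = (b + c) mod N"
  show "a = b"
  proof (cases "b \<le> a")
    case True
    then have "N dvd (a + c) - (b + c)" using e mod_eq_dvd_iff_nat[of "b + c" "a + c" N] by simp
    then have "N dvd a - b" by simp
    moreover have "a - b < N" using a by simp
    ultimately have "a - b = 0" using dvd_imp_le by (metis gr0I not_le)
    then show ?thesis using True by simp
  next
    case False
    then have "N dvd (b + c) - (a + c)" using e mod_eq_dvd_iff_nat[of "a + c" "b + c" N] by simp
    then have "N dvd b - a" by simp
    moreover have "b - a < N" using b by simp
    ultimately have "b - a = 0" using dvd_imp_le by (metis gr0I not_le)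
    then show ?thesis using False by simp
  qed
qed

lemma Cidx_inj: "p < N0 \<Longrightarrow> p' < N0 \<Longrightarrow> Cidx p = Cidx p' \<Longrightarrow> p = p'"
proof -
  assume p: "p < N0" and p': "p' < N0" and e: "Cidx p = Cidx p'"
  show "p = p'"
  proof (cases "p + g < N0")
    case True
    show ?thesis
    proof (cases "p' + g < N0")
      case True then show ?thesis using e \<open>p + g < N0\<close> unfolding Cidx_def by simp
    next
      case False
      then have "p + g = p' mod g" using e True unfolding Cidx_def by simp
      moreover have "p' mod g < g" using g_pos by simp
      ultimately show ?thesis by simp
    qed
  next
    case False
    show ?thesis
    proof (cases "p' + g < N0")
      case True
      then have "p' + g = p mod g" using e False unfolding Cidx_def by simp
      moreover have "p mod g < g" using g_pos by simp
      ultimately show ?thesis by simp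
    next
      case F2: False
      then have m: "p mod g = p' mod g" using e False unfolding Cidx_def by simp
      have "p div g = p' div g"
      proof (rule ccontr)
        assume "p div g \<noteq> p' div g"
        then have "p div g < p' div g \<or> p' div g < p div g" by auto
        then show False
        proof
          assume "p div g < p' div g"
          then have "(p div g + 1) * g \<le> (p' div g) * g" by (intro mult_le_mono1) simp
          then have "p div g * g + g \<le> p' div g * g" by simp
          moreover have "p = p div g * g + p mod g" "p' = p' div g * g + p' mod g" by simp_all
          ultimately have "p + g \<le> p'" using m by linarith
          then show False using p' False by simp
        next
          assume "p' div g < p div g"
          then have "(p' div g + 1) * g \<le> (p div g) * g" by (intro mult_le_mono1) simp
          then have "p' div g * g + g \<le> p div g * g" by simp
          moreover have "p = p div g * g + p mod g" "p' = p' div g * g + p' mod g" by simp_all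
          ultimately have "p' + g \<le> p" using m by linarith
          then show False using p F2 by simp
        qed
      qed
      then have "p div g * g + p mod g = p' div g * g + p' mod g" using m by simp
      then show ?thesis by simp
    qed
  qed
qed

lemma UU_inj: "inj_on UU PP"
proof (rule inj_onI)
  fix x y assume x: "x \<in> PP" and y: "y \<in> PP" and e: "UU x = UU y"
  obtain p d where pd: "x = (p, d)" by (cases x)
  obtain p' d' where pd': "y = (p', d')" by (cases y)
  have p: "p < N0" "d < k" using x pd by auto
  have p': "p' < N0" "d' < k" using y pd' by auto
  have z: "(d + 2) mod k = 0 \<longleftrightarrow> d + 2 = k" if "d < k" for d
  proof
    assume a: "(d + 2) mod k = 0"
    show "d + 2 = k"
    proof (rule ccontr)
      assume "d + 2 \<noteq> k"
      then have "d + 2 < k \<or> d + 2 = Suc k" using that by auto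
      then show False using a kk k3 by auto
    qed
  qed simp
  show "x = y"
  proof (cases "d + 2 = k")
    case True
    show ?thesis
    proof (cases "d' + 2 = k")
      case True
      then have "Cidx p = Cidx p'" using e \<open>d + 2 = k\<close> unfolding pd pd' UU_def by simp
      then show ?thesis using Cidx_inj p p' True \<open>d + 2 = k\<close> pd pd' by simp
    next
      case False
      then have "(d' + 2) mod k = 0" using e True unfolding pd pd' UU_def by simp
      then show ?thesis using z p' False by simp
    qed
  next
    case False
    show ?thesis
    proof (cases "d' + 2 = k")
      case True
      then have "(d + 2) mod k = 0" using e False unfolding pd pd' UU_def by simp
      then show ?thesis using z p False by simp
    next
      case F2: False
      then have e1: "(p + 1) mod N0 = (p' + 1) mod N0" and e2: "(d + 2) mod k = (d' + 2) mod k"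
        using e False unfolding pd pd' UU_def by simp_all
      have "p = p'" using modinj[OF p(1) p'(1) e1] .
      moreover have "d = d'" using modinj[OF p(2) p'(2) e2] .
      ultimately show ?thesis using pd pd' by simp
    qed
  qed
qed

lemma psi3_S3: "y \<in> S3 \<Longrightarrow> psi3 y \<in> S3"
proof -
  assume "y \<in> S3"
  have "(fst y + hh) mod N0 < N0" using N0_gt by simp
  then show "psi3 y \<in> S3" unfolding psi3_def using Cidx_lt by simp
qed

lemma reach3: "y \<in> PP \<Longrightarrow> \<exists>t. (UU ^^ t) y \<in> S3"
proof -
  assume y: "y \<in> PP"
  obtain p d where pd: "y = (p, d)" by (cases y)
  have p: "p < N0" and d: "d < k" using y pd by auto
  define c0 where "c0 = (if even d then d div 2 else (d + k) div 2)"
  have c0k: "c0 < k" unfolding c0_def using d by auto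
  have c0d: "(2 * c0) mod k = d"
  proof (cases "even d")
    case True then show ?thesis unfolding c0_def using d by simp
  next
    case False
    then have "even (d + k)" using kodd by simp
    then have "2 * ((d + k) div 2) = d + k" by simp
    then show ?thesis unfolding c0_def using False d by simp
  qed
  have "(UU ^^ (k - c0)) (p, d) = (Cidx ((p + (k - 1 - c0)) mod N0), 0)"
    using UU_last[OF p c0k] c0d by simp
  moreover have "Cidx ((p + (k - 1 - c0)) mod N0) < N0" using Cidx_lt N0_gt by simp
  ultimately have "(UU ^^ (k - c0)) y \<in> S3" unfolding pd by simp
  then show ?thesis by blast
qed

lemma ret3: assumes x: "x \<in> S3"
  shows "\<exists>\<tau>\<ge>1. (UU ^^ \<tau>) x = psi3 x \<and> (\<forall>t. 0 < t \<longrightarrow> t < \<tau> \<longrightarrow> (UU ^^ t) x \<notin> S3)"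
proof -
  obtain p d where pd: "x = (p, d)" by (cases x)
  have p: "p < N0" and d0: "d = 0" using x pd by auto
  have k0: "0 < k" using k3 by simp
  have last: "(UU ^^ k) (p, 0) = (Cidx ((p + (k - 1)) mod N0), 0)"
    using UU_last[OF p k0] by simp
  have "(p + (k - 1)) mod N0 = (p + hh + 1 * N0) mod N0" using hh_N0 by (simp add: algebra_simps)
  also have "\<dots> = (p + hh) mod N0" by (rule mod_mult_self1)
  finally have "(UU ^^ k) x = psi3 x" unfolding pd d0 last psi3_def by simp
  moreover have "(UU ^^ t) x \<notin> S3" if t: "0 < t" "t < k" for t
  proof -
    have "(UU ^^ t) (p, (2 * 0) mod k) = ((p + t) mod N0, (2 * (0 + t)) mod k)"
      by (rule UU_path[OF p]) (use t in simp)
    moreover have "(2 * t) mod k \<noteq> 0" using two_mod_zero t by fastforce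
    ultimately show ?thesis unfolding pd d0 by simp
  qed
  ultimately show ?thesis using k3 by (intro exI[of _ k]) simp
qed

lemma level3: "is_tour UU PP \<longleftrightarrow> is_tour psi3 S3"
  by (rule tour_return[OF PP_fin UU_PP UU_inj S3_sub reach3 psi3_S3 ret3])

lemma fst_bij: "bij_betw fst S3 {0..<N0}"
proof (rule bij_betw_byWitness[where f' = "\<lambda>p. (p, 0)"])
  show "\<forall>a\<in>S3. (fst a, 0) = a" unfolding S3_def by auto
  show "\<forall>a'\<in>{0..<N0}. fst (a', 0::nat) = a'" by simp
  show "fst ` S3 \<subseteq> {0..<N0}" unfolding S3_def by auto
  show "(\<lambda>p. (p, 0::nat)) ` {0..<N0} \<subseteq> S3" unfolding S3_def by auto
qed

lemma level3b: "is_tour psi3 S3 \<longleftrightarrow> is_tour psi {0..<N0}"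
proof (rule tour_conj[OF fst_bij])
  show "\<And>x. x \<in> S3 \<Longrightarrow> psi3 x \<in> S3" by (rule psi3_S3)
  show "\<And>x. x \<in> S3 \<Longrightarrow> fst (psi3 x) = psi (fst x)" unfolding psi3_def psi_def by simp
qed

lemma CN_side: "is_tour CNmap FF \<longleftrightarrow> is_tour psi {0..<N0}"
  using level0 level1 level2 level3 level3b by simp

end

lemma line_least:
  fixes c L M :: nat
  assumes c: "1 \<le> c" "c \<le> L" and LM: "L \<le> M"
  shows "(c - 1 + (LEAST t. 1 \<le> t \<and> (c - 1 + t) mod M + 1 \<le> L)) mod M + 1 = c mod L + 1"
proof (cases "c < L")
  case True
  define P where "P t \<longleftrightarrow> 1 \<le> t \<and> (c - 1 + t) mod M + 1 \<le> L" for t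
  have "P 1" unfolding P_def using c True LM by simp
  moreover have "\<And>y. P y \<Longrightarrow> 1 \<le> y" unfolding P_def by simp
  ultimately have "Least P = 1" by (rule Least_equality)
  then have l: "(LEAST t. 1 \<le> t \<and> (c - 1 + t) mod M + 1 \<le> L) = 1" unfolding P_def .
  show ?thesis unfolding l using c True LM by simp
next
  case False
  then have cL: "c = L" using c by simp
  have l: "(LEAST t. 1 \<le> t \<and> (c - 1 + t) mod M + 1 \<le> L) = M - L + 1"
  proof (rule Least_equality)
    have "c - 1 + (M - L + 1) = M" using cL c LM by simp
    then show "1 \<le> M - L + 1 \<and> (c - 1 + (M - L + 1)) mod M + 1 \<le> L" using c cL by simp
  next
    fix y assume y: "1 \<le> y \<and> (c - 1 + y) mod M + 1 \<le> L"
    show "M - L + 1 \<le> y"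
    proof (rule ccontr)
      assume "\<not> M - L + 1 \<le> y"
      then have "c - 1 + y < M" using cL c LM by simp
      then have "(c - 1 + y) mod M + 1 = c + y" using c by simp
      then show False using y cL c by auto
    qed
  qed
  have "c - 1 + (M - L + 1) = M" using cL c LM by simp
  then show ?thesis unfolding l using cL c by simp
qed

context P3 begin

definition WW where "WW = hh + g"
definition DD where "DD = {(r, c). r \<in> {1..q+1} \<and> c \<in> {1..hh+g} \<and> \<not> (r = q + 1 \<and> hh + g - f + 1 \<le> c)}"
definition Lr where "Lr r = (if r = q + 1 then WW - f else WW)"
definition Hc where "Hc c = (if WW - f < c then q else q + 1)"
definition kn where "kn = knight (q + 1) WW DD hh"

lemma WW_f: "f < WW" "1 \<le> WW - f" using fg g2 hh1 unfolding WW_def by auto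

lemma DD_mem: "(r, c) \<in> DD \<longleftrightarrow> 1 \<le> r \<and> r \<le> q + 1 \<and> 1 \<le> c \<and> c \<le> Lr r"
  unfolding DD_def Lr_def WW_def using fg g2 by auto

lemma DD_mem2: "(r, c) \<in> DD \<longleftrightarrow> 1 \<le> c \<and> c \<le> WW \<and> 1 \<le> r \<and> r \<le> Hc c"
  unfolding DD_def Hc_def WW_def using fg g2 by auto

lemma Lr_le: "Lr r \<le> WW" "1 \<le> Lr r" unfolding Lr_def using WW_f by auto
lemma Hc_le: "Hc c \<le> q + 1" "1 \<le> Hc c" unfolding Hc_def using q1 by auto

lemma sR_DD: assumes x: "(r, c) \<in> DD" shows "sR WW DD (r, c) = (r, c mod Lr r + 1)"
proof -
  have rc: "1 \<le> r" "r \<le> q + 1" "1 \<le> c" "c \<le> Lr r" using x DD_mem by auto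
  have "(\<lambda>t. 1 \<le> t \<and> (r, (c - 1 + t) mod WW + 1) \<in> DD) = (\<lambda>t. 1 \<le> t \<and> (c - 1 + t) mod WW + 1 \<le> Lr r)"
    using rc unfolding DD_mem by auto
  then have "sR WW DD (r, c) = (r, (c - 1 + (LEAST t. 1 \<le> t \<and> (c - 1 + t) mod WW + 1 \<le> Lr r)) mod WW + 1)"
    unfolding sR_def by simp
  also have "\<dots> = (r, c mod Lr r + 1)" using line_least[OF rc(3,4) Lr_le(1)] by simp
  finally show ?thesis .
qed

lemma sC_DD: assumes x: "(r, c) \<in> DD" shows "sC (q + 1) DD (r, c) = (r mod Hc c + 1, c)"
proof -
  have rc: "1 \<le> r" "r \<le> Hc c" "1 \<le> c" "c \<le> WW" using x DD_mem2 by auto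
  have "(\<lambda>t. 1 \<le> t \<and> ((r - 1 + t) mod (q + 1) + 1, c) \<in> DD) = (\<lambda>t. 1 \<le> t \<and> (r - 1 + t) mod (q + 1) + 1 \<le> Hc c)"
    using rc unfolding DD_mem2 by auto
  then have "sC (q + 1) DD (r, c) = ((r - 1 + (LEAST t. 1 \<le> t \<and> (r - 1 + t) mod (q + 1) + 1 \<le> Hc c)) mod (q + 1) + 1, c)"
    unfolding sC_def by simp
  also have "\<dots> = (r mod Hc c + 1, c)" using line_least[OF rc(1,2) Hc_le(1)] by simp
  finally show ?thesis .
qed

lemma sR_pow: "(r, c) \<in> DD \<Longrightarrow> (sR WW DD ^^ t) (r, c) = (r, (c - 1 + t) mod Lr r + 1)"
proof (induction t)
  case 0
  then have "1 \<le> c" "c \<le> Lr r" using DD_mem by auto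
  then show ?case by simp
next
  case (Suc t)
  have rc: "1 \<le> r" "r \<le> q + 1" using Suc.prems DD_mem by auto
  have L1: "1 \<le> Lr r" by (rule Lr_le(2))
  have inD: "(r, (c - 1 + t) mod Lr r + 1) \<in> DD" unfolding DD_mem using rc L1
    by (simp add: Suc_leI)
  have "(sR WW DD ^^ Suc t) (r, c) = sR WW DD (r, (c - 1 + t) mod Lr r + 1)" using Suc by simp
  also have "\<dots> = (r, ((c - 1 + t) mod Lr r + 1) mod Lr r + 1)" by (rule sR_DD[OF inD])
  also have "((c - 1 + t) mod Lr r + 1) mod Lr r = (c - 1 + Suc t) mod Lr r" by (simp add: mod_Suc_eq)
  finally show ?case .
qed

lemma kn_eq: assumes x: "(r, c) \<in> DD"
  shows "kn (r, c) = (r mod Hc ((c - 1 + hh) mod Lr r + 1) + 1, (c - 1 + hh) mod Lr r + 1)"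
proof -
  have rc: "1 \<le> r" "r \<le> q + 1" using x DD_mem by auto
  have "0 < Lr r" using Lr_le(2)[of r] by simp
  then have inD: "(r, (c - 1 + hh) mod Lr r + 1) \<in> DD" unfolding DD_mem using rc by (simp add: Suc_leI)
  show ?thesis unfolding kn_def knight_def using sR_pow[OF x] sC_DD[OF inD] by simp
qed

end

context P3 begin

definition lenr where "lenr r = (if r = q + 1 then g - f else g)"
definition YY where "YY = {y \<in> DD. hh < snd y}"
definition Yof where "Yof p = (p div g + 1, hh + p mod g + 1)"
definition Yidx where "Yidx y = (fst y - 1) * g + (snd y - hh - 1)"
definition psiK where "psiK y = Yof (psi (Yidx y))"

lemma Lr_eq: "Lr r = hh + lenr r" unfolding Lr_def lenr_def WW_def using fg by auto
lemma lenr_b: "1 \<le> lenr r" "lenr r \<le> g" unfolding lenr_def using fg g2 by auto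

lemma kn_alt: "(r, c) \<in> DD \<Longrightarrow> kn (r, c) = sC (q + 1) DD (r, (c - 1 + hh) mod Lr r + 1)"
  unfolding kn_def knight_def using sR_pow by simp

lemma Yof_YY: assumes p: "p < N0" shows "Yof p \<in> YY" "Yidx (Yof p) = p"
proof -
  have b: "p div g \<le> q" "p div g < q \<or> p mod g < g - f" using idx_bounds[OF p] by auto
  have w: "p mod g < g" using g_pos by simp
  have "p mod g + 1 \<le> lenr (p div g + 1)" unfolding lenr_def using b w by auto
  then show "Yof p \<in> YY" unfolding YY_def Yof_def using b by (simp add: DD_mem Lr_eq)
  show "Yidx (Yof p) = p" unfolding Yidx_def Yof_def by simp
qed

lemma YY_Yof: assumes y: "y \<in> YY" shows "Yidx y < N0" "Yof (Yidx y) = y"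
proof -
  obtain r c where rc: "y = (r, c)" by (cases y)
  have r: "1 \<le> r" "r \<le> q + 1" and c: "hh < c" "c \<le> hh + lenr r" using y unfolding rc YY_def by (auto simp: DD_mem Lr_eq)
  define w where "w = c - hh - 1"
  have w: "w < lenr r" "w < g" using c lenr_b[of r] unfolding w_def by auto
  have cond: "r - 1 \<le> q" "r - 1 < q \<or> w < g - f" using r w unfolding lenr_def by (auto split: if_splits)
  have "(r - 1) * g + w < N0" using idx_lt[OF w(2)] cond by simp
  then show "Yidx y < N0" unfolding Yidx_def rc w_def by simp
  have d: "((r - 1) * g + w) div g = r - 1" "((r - 1) * g + w) mod g = w" using w(2) by simp_all
  show "Yof (Yidx y) = y" unfolding Yidx_def Yof_def rc using d r c unfolding w_def by simp
qed

lemma sC_Y: assumes p: "p < N0" shows "sC (q + 1) DD (Yof p) = Yof (Cidx p)"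
proof -
  define u where "u = p div g"
  define w where "w = p mod g"
  have w: "w < g" unfolding w_def using g_pos by simp
  have b: "u \<le> q" "u < q \<or> w < g - f" using idx_bounds[OF p] unfolding u_def w_def by auto
  have YD: "Yof p \<in> DD" using Yof_YY[OF p] unfolding YY_def by simp
  have yo: "Yof p = (u + 1, hh + w + 1)" unfolding Yof_def u_def w_def by simp
  have H: "Hc (hh + w + 1) = (if g - f \<le> w then q else q + 1)" unfolding Hc_def WW_def using fg by auto
  have s: "sC (q + 1) DD (Yof p) = ((u + 1) mod Hc (hh + w + 1) + 1, hh + w + 1)"
    using sC_DD YD unfolding yo by simp
  have pe: "p = u * g + w" unfolding u_def w_def by simp
  show ?thesis
  proof (cases "p + g < N0")
    case True
    have pg: "p + g = (u + 1) * g + w" using pe by simp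
    then have c: "u + 1 \<le> q" "u + 1 < q \<or> w < g - f" using idx_lt[OF w, of "u + 1"] True by auto
    have "u + 1 < Hc (hh + w + 1)" unfolding H using c by auto
    then have "(u + 1) mod Hc (hh + w + 1) + 1 = u + 2" by simp
    moreover have "(p + g) div g = u + 1" "(p + g) mod g = w" unfolding u_def w_def using g_pos by (simp_all add: div_add_self2)
    moreover have "Yof (Cidx p) = (u + 2, hh + w + 1)" unfolding Cidx_def Yof_def using True calculation(2,3) by simp
    ultimately show ?thesis using s by simp
  next
    case False
    have pg: "p + g = (u + 1) * g + w" using pe by simp
    then have c: "\<not> (u + 1 \<le> q \<and> (u + 1 < q \<or> w < g - f))" using idx_lt[OF w, of "u + 1"] False by auto
    have "u + 1 = Hc (hh + w + 1)" unfolding H using c b by auto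
    then have "(u + 1) mod Hc (hh + w + 1) + 1 = 1" by (metis mod_self add_0)
    moreover have "Yof (Cidx p) = (1, hh + w + 1)" unfolding Cidx_def Yof_def using False w unfolding w_def by simp
    ultimately show ?thesis using s by simp
  qed
qed

end

context P3 begin

lemma mod_once: "(L::nat) \<le> x \<Longrightarrow> x < 2 * L \<Longrightarrow> x mod L = x - L"
proof -
  assume a: "L \<le> x" "x < 2 * L"
  then have "x mod L = (x - L) mod L" by (simp add: le_mod_geq)
  also have "\<dots> = x - L" using a by simp
  finally show ?thesis .
qed

lemma DD_fin: "finite DD" unfolding DD_def by (rule finite_subset[of _ "{1..q+1} \<times> {1..hh+g}"]) auto

lemma kn_DD: assumes x: "x \<in> DD" shows "kn x \<in> DD"
proof -
  obtain r c where rc: "x = (r, c)" by (cases x)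
  have rD: "(r, c) \<in> DD" using x rc by simp
  have r: "1 \<le> r" "r \<le> q + 1" using rD DD_mem by auto
  have "0 < Lr r" using Lr_le(2)[of r] by simp
  then have inD: "(r, (c - 1 + hh) mod Lr r + 1) \<in> DD" unfolding DD_mem using r by (simp add: Suc_leI)
  define c' where "c' = (c - 1 + hh) mod Lr r + 1"
  have "0 < Hc c'" using Hc_le(2)[of c'] by simp
  then have "(r mod Hc c' + 1, c') \<in> DD" using inD unfolding c'_def[symmetric] DD_mem2 by (simp add: Suc_leI)
  then show ?thesis unfolding rc kn_alt[OF rD] sC_DD[OF inD] c'_def by simp
qed

lemma kn_inj: "inj_on kn DD"
proof (rule inj_onI)
  fix x y assume x: "x \<in> DD" and y: "y \<in> DD" and e: "kn x = kn y"
  obtain r1 c1 where rc1: "x = (r1, c1)" by (cases x)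
  obtain r2 c2 where rc2: "y = (r2, c2)" by (cases y)
  have D1: "(r1, c1) \<in> DD" and D2: "(r2, c2) \<in> DD" using x y rc1 rc2 by auto
  have b1: "1 \<le> r1" "1 \<le> c1" "c1 \<le> Lr r1" using D1 DD_mem by auto
  have b2: "1 \<le> r2" "1 \<le> c2" "c2 \<le> Lr r2" using D2 DD_mem by auto
  define c1' where "c1' = (c1 - 1 + hh) mod Lr r1 + 1"
  define c2' where "c2' = (c2 - 1 + hh) mod Lr r2 + 1"
  have "0 < Lr r1" "0 < Lr r2" using Lr_le(2) by (simp_all add: Suc_le_eq)
  then have in1: "(r1, c1') \<in> DD" and in2: "(r2, c2') \<in> DD" unfolding DD_mem c1'_def c2'_def using D1 D2 DD_mem
    by (auto simp: Suc_leI)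
  have k1: "kn (r1, c1) = (r1 mod Hc c1' + 1, c1')" unfolding kn_alt[OF D1] c1'_def[symmetric] using sC_DD[OF in1] .
  have k2: "kn (r2, c2) = (r2 mod Hc c2' + 1, c2')" unfolding kn_alt[OF D2] c2'_def[symmetric] using sC_DD[OF in2] .
  have cc: "c1' = c2'" and rr: "r1 mod Hc c1' = r2 mod Hc c1'" using e k1 k2 rc1 rc2 by auto
  have h1: "r1 \<le> Hc c1'" "r2 \<le> Hc c1'" using in1 in2 cc DD_mem2 by auto
  have "(r1 - 1 + 1) mod Hc c1' = (r2 - 1 + 1) mod Hc c1'" using rr b1 b2 by simp
  moreover have "r1 - 1 < Hc c1'" "r2 - 1 < Hc c1'" using h1 b1 b2 by auto
  ultimately have "r1 - 1 = r2 - 1" using modinj[of "r1 - 1" "Hc c1'" "r2 - 1" 1] by blast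
  then have r12: "r1 = r2" using b1 b2 by simp
  have "(c1 - 1 + hh) mod Lr r1 = (c2 - 1 + hh) mod Lr r1" using cc r12 unfolding c1'_def c2'_def by simp
  then have "c1 - 1 = c2 - 1" using modinj[of "c1 - 1" "Lr r1" "c2 - 1" hh] b1 b2 r12 by simp
  then have "c1 = c2" using b1 b2 by simp
  then show "x = y" using rc1 rc2 r12 by simp
qed

lemma kn_lowA:
  assumes r: "1 \<le> r" "r \<le> q + 1" and c: "1 \<le> c" "c \<le> lenr r"
  shows "(r - 1) * g + (c - 1) < N0" and "kn (r, c) = Yof (Cidx ((r - 1) * g + (c - 1)))"
proof -
  define p' where "p' = (r - 1) * g + (c - 1)"
  have cg: "c - 1 < g" using c lenr_b[of r] by simp
  have cond: "r - 1 \<le> q" "r - 1 < q \<or> c - 1 < g - f" using r c unfolding lenr_def by (auto split: if_splits)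
  show pl: "(r - 1) * g + (c - 1) < N0" using idx_lt[OF cg] cond by simp
  have rD: "(r, c) \<in> DD" unfolding DD_mem Lr_eq using r c by simp
  have col: "(c - 1 + hh) mod Lr r + 1 = hh + (c - 1) + 1" unfolding Lr_eq using c by simp
  have yo: "Yof p' = (r, hh + (c - 1) + 1)" unfolding Yof_def p'_def using cg r by simp
  show "kn (r, c) = Yof (Cidx ((r - 1) * g + (c - 1)))"
    unfolding kn_alt[OF rD] col yo[symmetric] using sC_Y pl unfolding p'_def by simp
qed

lemma kn_lowB:
  assumes r: "1 \<le> r" "r \<le> q + 1" and c: "c \<le> hh" "lenr r < c"
  shows "kn (r, c) = (r mod (q + 1) + 1, c - lenr r)"
proof -
  have rD: "(r, c) \<in> DD" unfolding DD_mem Lr_eq using r c by simp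
  have m: "(c - 1 + hh) mod Lr r = c - 1 - lenr r" unfolding Lr_eq using mod_once[of "hh + lenr r" "c - 1 + hh"] c lenr_b[of r] by simp
  have col: "(c - 1 + hh) mod Lr r + 1 = c - lenr r" unfolding m using c by simp
  have "1 \<le> c - lenr r" "c - lenr r \<le> hh + lenr r" using c by auto
  then have inD: "(r, c - lenr r) \<in> DD" unfolding DD_mem Lr_eq using r by simp
  have H: "Hc (c - lenr r) = q + 1" unfolding Hc_def WW_def using c fg by simp
  show ?thesis unfolding kn_alt[OF rD] col sC_DD[OF inD] H by simp
qed

lemma N0_split: "N0 = q * g + lenr (q + 1)" unfolding lenr_def using N0_eq by simp

lemma Pk: "1 \<le> r \<Longrightarrow> r \<le> q + 1 \<Longrightarrow> 1 \<le> c \<Longrightarrow> c \<le> hh \<Longrightarrow>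
  \<exists>\<tau>\<ge>1. (kn ^^ \<tau>) (r, c) = Yof (Cidx (((r - 1) * g + (c - 1)) mod N0)) \<and> (\<forall>t. 0 < t \<longrightarrow> t < \<tau> \<longrightarrow> (kn ^^ t) (r, c) \<notin> YY)"
proof (induction c arbitrary: r rule: less_induct)
  case (less c)
  show ?case
  proof (cases "c \<le> lenr r")
    case True
    have "(r - 1) * g + (c - 1) < N0" "kn (r, c) = Yof (Cidx ((r - 1) * g + (c - 1)))"
      using kn_lowA[OF less.prems(1,2,3) True] by auto
    then have "(kn ^^ 1) (r, c) = Yof (Cidx (((r - 1) * g + (c - 1)) mod N0))" by simp
    then show ?thesis by (intro exI[of _ 1]) simp
  next
    case False
    define r' where "r' = r mod (q + 1) + 1"
    define c2 where "c2 = c - lenr r"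
    have k1: "kn (r, c) = (r', c2)" unfolding r'_def c2_def using kn_lowB[OF less.prems(1,2,4)] False by simp
    have r': "1 \<le> r'" "r' \<le> q + 1" unfolding r'_def by simp_all
    have c2: "c2 < c" "1 \<le> c2" "c2 \<le> hh" unfolding c2_def using False less.prems lenr_b[of r] by auto
    obtain \<tau> where tau: "\<tau> \<ge> 1" "(kn ^^ \<tau>) (r', c2) = Yof (Cidx (((r' - 1) * g + (c2 - 1)) mod N0))"
      "\<forall>t. 0 < t \<longrightarrow> t < \<tau> \<longrightarrow> (kn ^^ t) (r', c2) \<notin> YY"
      using less.IH[OF c2(1) r' c2(2,3)] by blast
    have idx: "((r' - 1) * g + (c2 - 1)) mod N0 = ((r - 1) * g + (c - 1)) mod N0"
    proof (cases "r \<le> q")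
      case True
      then have "r' = r + 1" "lenr r = g" unfolding r'_def lenr_def by auto
      moreover have "r * g = (r - 1) * g + g" using less.prems(1) by (cases r) auto
      ultimately show ?thesis unfolding c2_def using False by simp
    next
      case F2: False
      then have rq: "r = q + 1" using less.prems by simp
      then have "r' = 1" unfolding r'_def by simp
      moreover have "(r - 1) * g + (c - 1) = (c2 - 1) + 1 * N0"
        unfolding c2_def N0_split rq using False rq by simp
      ultimately show ?thesis by (simp only: mod_mult_self1) simp
    qed
    have step: "(kn ^^ Suc t) (r, c) = (kn ^^ t) (r', c2)" for t
      using k1 by (simp add: funpow_Suc_right del: funpow.simps)
    show ?thesis
    proof (intro exI conjI allI impI)
      show "1 \<le> Suc \<tau>" by simp
      show "(kn ^^ Suc \<tau>) (r, c) = Yof (Cidx (((r - 1) * g + (c - 1)) mod N0))" using step tau(2) idx by simp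
      fix t assume t: "0 < t" "t < Suc \<tau>"
      show "(kn ^^ t) (r, c) \<notin> YY"
      proof (cases "t = 1")
        case True then show ?thesis using k1 c2 unfolding YY_def by simp
      next
        case False
        then have "(kn ^^ t) (r, c) = (kn ^^ (t - 1)) (r', c2)" using step[of "t - 1"] t by simp
        moreover have "0 < t - 1" "t - 1 < \<tau>" using t False by auto
        ultimately show ?thesis using tau(3) by simp
      qed
    qed
  qed
qed

end

context P3 begin

lemma retY: assumes p: "p < N0"
  shows "\<exists>\<tau>\<ge>1. (kn ^^ \<tau>) (Yof p) = Yof (psi p) \<and> (\<forall>t. 0 < t \<longrightarrow> t < \<tau> \<longrightarrow> (kn ^^ t) (Yof p) \<notin> YY)"
proof -
  define u where "u = p div g"
  define w where "w = p mod g"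
  define r where "r = u + 1"
  have pe: "p = u * g + w" unfolding u_def w_def by simp
  have wg: "w < g" unfolding w_def using g_pos by simp
  have yo: "Yof p = (r, hh + w + 1)" unfolding Yof_def r_def u_def w_def by simp
  have YD: "(r, hh + w + 1) \<in> DD" using Yof_YY(1)[OF p] unfolding YY_def yo by simp
  have r: "1 \<le> r" "r \<le> q + 1" using YD DD_mem by auto
  have wl: "w + 1 \<le> lenr r" using YD unfolding DD_mem Lr_eq by simp
  have kn0: "kn (Yof p) = sC (q + 1) DD (r, (hh + w + 1 - 1 + hh) mod Lr r + 1)" unfolding yo by (rule kn_alt[OF YD])
  show ?thesis
  proof (cases "w + 1 + hh \<le> lenr r")
    case True
    have col: "(hh + w + 1 - 1 + hh) mod Lr r + 1 = hh + (w + hh) + 1" unfolding Lr_eq using True by simp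
    have wh: "w + hh < g" using True lenr_b[of r] by simp
    have ph: "p + hh = u * g + (w + hh)" using pe by simp
    have cond: "u \<le> q" "u < q \<or> w + hh < g - f" using r True unfolding r_def lenr_def by (auto split: if_splits)
    have phN: "p + hh < N0" unfolding ph using idx_lt[OF wh] cond by simp
    have yo2: "Yof (p + hh) = (r, hh + (w + hh) + 1)" unfolding Yof_def ph r_def using wh by simp
    have "kn (Yof p) = Yof (Cidx (p + hh))" unfolding kn0 col yo2[symmetric] using sC_Y[OF phN] .
    moreover have "psi p = Cidx (p + hh)" unfolding psi_def using phN by simp
    ultimately have "(kn ^^ 1) (Yof p) = Yof (psi p)" by simp
    then show ?thesis by (intro exI[of _ 1]) simp
  next
    case False
    define c1 where "c1 = w + hh + 1 - lenr r"
    define r' where "r' = r mod (q + 1) + 1"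
    have m: "(hh + w + 1 - 1 + hh) mod Lr r = w + hh - lenr r"
      unfolding Lr_eq using mod_once[of "hh + lenr r" "hh + w + 1 - 1 + hh"] False wl by simp
    have col: "(hh + w + 1 - 1 + hh) mod Lr r + 1 = c1" unfolding m c1_def using False by simp
    have c1: "1 \<le> c1" "c1 \<le> hh" unfolding c1_def using False wl by auto
    have inD: "(r, c1) \<in> DD" unfolding DD_mem Lr_eq using r c1 by simp
    have H: "Hc c1 = q + 1" unfolding Hc_def WW_def using c1 fg by simp
    have k1: "kn (Yof p) = (r', c1)" unfolding kn0 col sC_DD[OF inD] H r'_def by simp
    have r': "1 \<le> r'" "r' \<le> q + 1" unfolding r'_def by simp_all
    obtain \<tau> where tau: "\<tau> \<ge> 1" "(kn ^^ \<tau>) (r', c1) = Yof (Cidx (((r' - 1) * g + (c1 - 1)) mod N0))"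
      "\<forall>t. 0 < t \<longrightarrow> t < \<tau> \<longrightarrow> (kn ^^ t) (r', c1) \<notin> YY"
      using Pk[OF r' c1] by blast
    have idx: "((r' - 1) * g + (c1 - 1)) mod N0 = (p + hh) mod N0"
    proof (cases "r \<le> q")
      case True
      then have "r' = r + 1" "lenr r = g" unfolding r'_def lenr_def by auto
      moreover have "r * g = u * g + g" unfolding r_def by simp
      ultimately show ?thesis unfolding c1_def pe using False by (simp add: add.assoc)
    next
      case F2: False
      then have rq: "r = q + 1" using r by simp
      then have "r' = 1" unfolding r'_def by simp
      moreover have "p + hh = (c1 - 1) + 1 * N0"
        unfolding c1_def N0_split pe using False rq unfolding r_def by simp
      ultimately show ?thesis by (simp only: mod_mult_self1) simp
    qed
    have step: "(kn ^^ Suc t) (Yof p) = (kn ^^ t) (r', c1)" for t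
      using k1 by (simp add: funpow_Suc_right del: funpow.simps)
    show ?thesis
    proof (intro exI conjI allI impI)
      show "1 \<le> Suc \<tau>" by simp
      show "(kn ^^ Suc \<tau>) (Yof p) = Yof (psi p)" using step tau(2) idx unfolding psi_def by simp
      fix t assume t: "0 < t" "t < Suc \<tau>"
      show "(kn ^^ t) (Yof p) \<notin> YY"
      proof (cases "t = 1")
        case True then show ?thesis using k1 c1 unfolding YY_def by simp
      next
        case False
        then have "(kn ^^ t) (Yof p) = (kn ^^ (t - 1)) (r', c1)" using step[of "t - 1"] t by simp
        moreover have "0 < t - 1" "t - 1 < \<tau>" using t False by auto
        ultimately show ?thesis using tau(3) by simp
      qed
    qed
  qed
qed

lemma psi_lt: "psi p < N0" unfolding psi_def using Cidx_lt N0_gt by simp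

lemma YY_sub: "YY \<subseteq> DD" unfolding YY_def by auto

lemma reachK: "y \<in> DD \<Longrightarrow> \<exists>t. (kn ^^ t) y \<in> YY"
proof -
  assume y: "y \<in> DD"
  obtain r c where rc: "y = (r, c)" by (cases y)
  have b: "1 \<le> r" "r \<le> q + 1" "1 \<le> c" using y rc DD_mem by auto
  show ?thesis
  proof (cases "hh < c")
    case True
    then have "(kn ^^ 0) y \<in> YY" using y rc unfolding YY_def by simp
    then show ?thesis by blast
  next
    case False
    then obtain \<tau> where "(kn ^^ \<tau>) (r, c) = Yof (Cidx (((r - 1) * g + (c - 1)) mod N0))"
      using Pk[OF b(1,2,3)] by force
    moreover have "Yof (Cidx (((r - 1) * g + (c - 1)) mod N0)) \<in> YY"
      using Yof_YY(1) Cidx_lt N0_gt by simp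
    ultimately show ?thesis unfolding rc by metis
  qed
qed

lemma psiK_YY: "y \<in> YY \<Longrightarrow> psiK y \<in> YY" unfolding psiK_def using Yof_YY(1) psi_lt by simp

lemma levelK: "is_tour kn DD \<longleftrightarrow> is_tour psiK YY"
proof (rule tour_return[OF DD_fin kn_DD kn_inj YY_sub reachK psiK_YY])
  fix x assume x: "x \<in> YY"
  have xe: "x = Yof (Yidx x)" using YY_Yof(2)[OF x] by simp
  have "psiK x = Yof (psi (Yidx x))" unfolding psiK_def ..
  then show "\<exists>\<tau>\<ge>1. (kn ^^ \<tau>) x = psiK x \<and> (\<forall>t. 0 < t \<longrightarrow> t < \<tau> \<longrightarrow> (kn ^^ t) x \<notin> YY)"
    using retY[OF YY_Yof(1)[OF x]] xe by simp
qed simp_all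

lemma Yidx_bij: "bij_betw Yidx YY {0..<N0}"
proof (rule bij_betw_byWitness[where f' = Yof])
  show "\<forall>a\<in>YY. Yof (Yidx a) = a" using YY_Yof(2) by blast
  show "\<forall>a'\<in>{0..<N0}. Yidx (Yof a') = a'" using Yof_YY(2) by simp
  show "Yidx ` YY \<subseteq> {0..<N0}" using YY_Yof(1) by auto
  show "Yof ` {0..<N0} \<subseteq> YY" using Yof_YY(1) by auto
qed

lemma levelK2: "is_tour psiK YY \<longleftrightarrow> is_tour psi {0..<N0}"
proof (rule tour_conj[OF Yidx_bij])
  show "\<And>x. x \<in> YY \<Longrightarrow> psiK x \<in> YY" by (rule psiK_YY)
  show "\<And>x. x \<in> YY \<Longrightarrow> Yidx (psiK x) = psi (Yidx x)" unfolding psiK_def using Yof_YY(2) psi_lt by simp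
qed

lemma kn_side: "is_tour kn DD \<longleftrightarrow> is_tour psi {0..<N0}"
  using levelK levelK2 by simp

lemma main: "is_tour CNmap FF \<longleftrightarrow> is_tour kn DD"
  using kn_side CN_side by simp

end

theorem theorem3p6:
  fixes n k g m l q f :: nat and js :: "nat \<Rightarrow> nat" and E :: "nat set"
  assumes "odd n" and "odd k" and "n > k" and "k \<ge> 3"
    and "g = gcd n (k - 1)" and "m = n div g" and "l = (k - 1) div g"
    and "E \<subseteq> {1..n}"
    and "1 \<le> q" and "q \<le> l - 1"
    and "\<forall>s\<in>{1..q+1}. js s \<in> {1..m}"
    and "\<forall>s\<in>{1..q}. js s < js (s + 1)"
    and "\<forall>s\<in>{1..q}. (int (js (s + 1)) - int (js s)) mod int m = (- int l) mod int m"
    and "1 \<le> f" and "f \<le> g - 1"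
    and "E = (\<Union>s\<in>{1..q+1}. Iblock g (js s)) - {js (q+1) * g - f + 1 .. js (q+1) * g}"
  shows "is_tour (CN n n (cyc_diag n k) (\<lambda>i. if i \<in> E then -1 else 1) (\<lambda>_. 1)) (cyc_diag n k)
     \<longleftrightarrow>
     (let h = k - 1 - card E;
          D = {(r, c). r \<in> {1..q+1} \<and> c \<in> {1..h+g} \<and> \<not> (r = q + 1 \<and> h + g - f + 1 \<le> c)}
      in is_tour (knight (q+1) (h+g) D h) D)"
proof -
  interpret P: P3 n k g m l q f js
    by (unfold_locales) (use assms in auto)
  have E: "E = P.Eset" using assms(16) unfolding P.Eset_def by simp
  have h: "k - 1 - card E = P.hh" unfolding E P.card_Eset P.hh_def ..
  have D: "{(r, c). r \<in> {1..q+1} \<and> c \<in> {1..P.hh+g} \<and> \<not> (r = q + 1 \<and> P.hh + g - f + 1 \<le> c)} = P.DD"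
    unfolding P.DD_def ..
  have K: "knight (q+1) (P.hh+g) P.DD P.hh = P.kn" unfolding P.kn_def P.WW_def ..
  have C: "CN n n (cyc_diag n k) (\<lambda>i. if i \<in> E then -1 else 1) (\<lambda>_. 1) = P.CNmap"
    unfolding P.CNmap_def P.FF_def E ..
  have F: "cyc_diag n k = P.FF" unfolding P.FF_def ..
  show ?thesis unfolding Let_def h D K C unfolding F using P.main .
qed

end
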